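(* Let $X$ be a real Banach space, $I=\{1,\ldots,m\}$, $J=\{1,\ldots,l\}$, let $f_i\colon X\to\mathbb{R}$ ($i\in I$) and $g_j\colon X\to\mathbb{R}$ ($j\in J$) be given, and let $$M=\{x\in X \mid f_i(x)=0\ \forall i\in I,\ g_j(x)\le 0\ \forall j\in J\}.$$ Let $\overline{x}\in M$ and $J(\overline{x})=\{j\in J\mid g_j(\overline{x})=0\}$. Suppose that the functions $f_i$, $i\in I$, are continuous in a neighbourhood of $\overline{x}$; the functions $g_j$, $j\notin J(\overline{x})$, are upper semicontinuous at $\overline{x}$; and the functions $f_i$, $i\in I$, and $g_j$, $j\in J(\overline{x})$, are quasidifferentiable at $\overline{x}$ uniformly along finite dimensional spaces, with given quasidifferentials $[\underline{\partial} f_i(\overline{x}),\overline{\partial} f_i(\overline{x})]$ and $[\underline{\partial} g_j(\overline{x}),\overline{\partial} g_j(\overline{x})]$. Let $x_i^*\in\underline{\partial} f_i(\overline{x})$, $y_i^*\in\overline{\partial} f_i(\overline{x})$, $i\in I$, and $z_j^*\in\overline{\partial} g_j(\overline{x})$, $j\in J(\overline{x})$, be given, and suppose the following constraint qualification holds: (1) for any $i\in I$ there exists $v_i\in X$ such that $s(\underline{\partial} f_i(\overline{x})+y_i^*,v_i)<0$ and for any $k\ne i$ one has $s(\underline{\partial} f_k(\overline{x})+y_k^*,v_i)\le 0$ and $s(-x_k^*-\overline{\partial} f_k(\overline{x}),v_i)\le 0$; (2) for any $i\in I$ there exists $w_i\in X$ such that $s(-x_i^*-\overline{\partial} f_i(\overline{x}),w_i)<0$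 and for any $k\ne i$ one has $s(-x_k^*-\overline{\partial} f_k(\overline{x}),w_i)\le 0$ and $s(\underline{\partial} f_k(\overline{x})+y_k^*,w_i)\le 0$; (3) there exists $v_0\in X$ such that $s(\underline{\partial} g_j(\overline{x})+z_j^*,v_0)<0$ for any $j\in J(\overline{x})$, while for any $i\in I$ one has $s(\underline{\partial} f_i(\overline{x})+y_i^*,v_0)\le 0$ and $s(-x_i^*-\overline{\partial} f_i(\overline{x}),v_0)\le 0$. Then $$\Big\{v\in X \Bigm| s(\underline{\partial} f_i(\overline{x})+y_i^*,v)\le 0,\ s(-x_i^*-\overline{\partial} f_i(\overline{x}),v)\le 0\ \forall i\in I,\ s(\underline{\partial} g_j(\overline{x})+z_j^*,v)\le 0\ \forall j\in J(\overline{x})\Big\}\subseteq T_M(\overline{x}).$$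
   Context: $X$ is a real Banach space with topological dual $X^*$ and duality pairing $\langle\cdot,\cdot\rangle$. A function $f\colon X\to\mathbb{R}$ is directionally differentiable (d.d.) at $x$ if for every $v\in X$ the finite limit $f'(x,v)=\lim_{\alpha\to+0}(f(x+\alpha v)-f(x))/\alpha$ exists. It is d.d. at $x$ uniformly along finite dimensional spaces if it is d.d. at $x$ and for any $v\in X$, any finite dimensional subspace $X_0\subset X$ and any $\varepsilon>0$ there is $\delta>0$ such that $|(f(x+\alpha v')-f(x))/\alpha-f'(x,v)|<\varepsilon$ for all $\alpha\in(0,\delta)$ and $v'\in v+X_0$ with $\|v'-v\|<\delta$. $f$ is quasidifferentiable at $x$ if it is d.d. at $x$ and there is a pair $[\underline{\partial} f(x),\overline{\partial} f(x)]$ (a quasidifferential; subdifferential and superdifferential) of convex weak$^*$ compact subsets of $X^*$ with $f'(x,v)=\max_{x^*\in\underline{\partial} f(x)}\langle x^*,v\rangle+\min_{y^*\in\overline{\partial} f(x)}\langle y^*,v\rangle$ for all $v\in X$; it is quasidifferentiable uniformly along finite dimensional spaces if additionally d.d. uniformly along finite dimensional spaces. Quasidifferentials are not unique; a specific one is fixed for each function and all conditions refer to it. For $C\subset X^*$, $s(C,v)=\sup_{x^*\in C}\langle x^*,v\rangle$ is the support function. The contingent cone $T_M(x)$ to $M$ at $x\in M$ is the set of $v\in X$ for which there exist $\alpha_n\to+0$ and $v_n\to v$ with $x+\alpha_n v_n\in M$ for all $n$. Sums like $A+y^*$ are Minkowski sums. *)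

theory Defs
  imports "HOL-Analysis.Analysis"
begin

text \<open>The type 'a \<Rightarrow> real carries the product topology (HOL-Analysis,
  Function_Topology), i.e. the topology of pointwise convergence; restricted to X*
  this is exactly the weak* topology, so weak* compactness of C \<subseteq> X* is
  compactness of C in this topology.\<close>

definition dual_space :: "('a::real_normed_vector \<Rightarrow> real) set" where
  "dual_space = {\<phi>. bounded_linear \<phi>}"

definition fun_convex :: "('a \<Rightarrow> real) set \<Rightarrow> bool" where
  "fun_convex C \<longleftrightarrow> (\<forall>p\<in>C. \<forall>q\<in>C. \<forall>t::real. 0 \<le> t \<and> t \<le> 1 \<longrightarrow>
      (\<lambda>v. t * p v + (1 - t) * q v) \<in> C)"

definition cwc_set :: "('a::real_normed_vector \<Rightarrow> real) set \<Rightarrow> bool" where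
  "cwc_set C \<longleftrightarrow> C \<noteq> {} \<and> C \<subseteq> dual_space \<and> fun_convex C \<and> compact C"

definition supp :: "('a \<Rightarrow> real) set \<Rightarrow> 'a \<Rightarrow> real" where
  "supp C v = (SUP c\<in>C. c v)"

definition mink_plus :: "('a \<Rightarrow> real) set \<Rightarrow> ('a \<Rightarrow> real) set \<Rightarrow> ('a \<Rightarrow> real) set" where
  "mink_plus A B = {(\<lambda>v. a v + b v) | a b. a \<in> A \<and> b \<in> B}"

definition fun_uminus_set :: "('a \<Rightarrow> real) set \<Rightarrow> ('a \<Rightarrow> real) set" where
  "fun_uminus_set A = (\<lambda>a v. - a v) ` A"

definition dir_diff :: "('a::real_normed_vector \<Rightarrow> real) \<Rightarrow> 'a \<Rightarrow> bool" where
  "dir_diff f x \<longleftrightarrow> (\<forall>v. \<exists>L. ((\<lambda>\<alpha>. (f (x + \<alpha> *\<^sub>R v) - f x) / \<alpha>) \<longlongrightarrow> L) (at_right 0))"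

definition dir_deriv :: "('a::real_normed_vector \<Rightarrow> real) \<Rightarrow> 'a \<Rightarrow> 'a \<Rightarrow> real" where
  "dir_deriv f x v = Lim (at_right 0) (\<lambda>\<alpha>. (f (x + \<alpha> *\<^sub>R v) - f x) / \<alpha>)"

definition finite_dim_subspace :: "'a::real_vector set \<Rightarrow> bool" where
  "finite_dim_subspace X0 \<longleftrightarrow> subspace X0 \<and> (\<exists>B. finite B \<and> X0 = span B)"

definition dir_diff_unif :: "('a::real_normed_vector \<Rightarrow> real) \<Rightarrow> 'a \<Rightarrow> bool" where
  "dir_diff_unif f x \<longleftrightarrow> dir_diff f x \<and>
     (\<forall>v X0 \<epsilon>. finite_dim_subspace X0 \<and> \<epsilon> > 0 \<longrightarrow>
        (\<exists>\<delta>>0. \<forall>\<alpha> v'. 0 < \<alpha> \<and> \<alpha> < \<delta> \<and> v' - v \<in> X0 \<and> norm (v' - v) < \<delta> \<longrightarrow>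
            \<bar>(f (x + \<alpha> *\<^sub>R v') - f x) / \<alpha> - dir_deriv f x v\<bar> < \<epsilon>))"

text \<open>[Dl, Du] is a quasidifferential of f at x (max and min written as SUP/INF; they are attained since the sets are nonempty and compact).\<close>
definition quasidiff :: "('a::real_normed_vector \<Rightarrow> real) \<Rightarrow> 'a \<Rightarrow> ('a \<Rightarrow> real) set \<Rightarrow> ('a \<Rightarrow> real) set \<Rightarrow> bool" where
  "quasidiff f x Dl Du \<longleftrightarrow> dir_diff f x \<and> cwc_set Dl \<and> cwc_set Du \<and>
     (\<forall>v. dir_deriv f x v = (SUP p\<in>Dl. p v) + (INF q\<in>Du. q v))"

definition quasidiff_unif :: "('a::real_normed_vector \<Rightarrow> real) \<Rightarrow> 'a \<Rightarrow> ('a \<Rightarrow> real) set \<Rightarrow> ('a \<Rightarrow> real) set \<Rightarrow> bool" where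
  "quasidiff_unif f x Dl Du \<longleftrightarrow> quasidiff f x Dl Du \<and> dir_diff_unif f x"

definition usc_at :: "('a::topological_space \<Rightarrow> real) \<Rightarrow> 'a \<Rightarrow> bool" where
  "usc_at f x \<longleftrightarrow> (\<forall>\<epsilon>>0. \<forall>\<^sub>F y in at x. f y < f x + \<epsilon>)"

definition contingent_cone :: "'a::real_normed_vector set \<Rightarrow> 'a \<Rightarrow> 'a set" where
  "contingent_cone M x = {v. \<exists>\<alpha> w. (\<forall>n. \<alpha> n > 0) \<and> \<alpha> \<longlonglongrightarrow> 0 \<and> w \<longlonglongrightarrow> v \<and>
      (\<forall>n. x + \<alpha> n *\<^sub>R w n \<in> M)}"

end

theory Submission
  imports Defs
begin


lemma miranda:
  fixes \<Phi> :: "(nat \<Rightarrow> real) \<Rightarrow> 'b::metric_space" and G :: "nat \<Rightarrow> 'b \<Rightarrow> real"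
    and C :: "(nat \<Rightarrow> real) set"
  assumes C_def: "C = {t. \<forall>j. t j \<in> (if j < m then {0..1} else {0})}"
    and K: "compact K" "\<Phi> ` C \<subseteq> K"
    and L0: "0 \<le> L"
    and L: "\<forall>t\<in>C. \<forall>t'\<in>C. dist (\<Phi> t) (\<Phi> t') \<le> L * (\<Sum>j<m. \<bar>t j - t' j\<bar>)"
    and cont: "\<forall>i<m. continuous_on K (G i)"
    and f0: "\<forall>i<m. \<forall>t\<in>C. t i = 0 \<longrightarrow> 0 \<le> G i (\<Phi> t)"
    and f1: "\<forall>i<m. \<forall>t\<in>C. t i = 1 \<longrightarrow> G i (\<Phi> t) \<le> 0"
  shows "\<exists>z\<in>K. \<forall>i<m. G i z = 0"
proof -
  have step: "\<exists>c\<in>C. \<forall>i<m. \<exists>a\<in>C. \<exists>b\<in>C. (\<Sum>j<m. \<bar>a j - c j\<bar>) \<le> real m / real (Suc n)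
      \<and> (\<Sum>j<m. \<bar>b j - c j\<bar>) \<le> real m / real (Suc n) \<and> 0 \<le> G i (\<Phi> a) \<and> G i (\<Phi> b) \<le> 0" for n
  proof -
    define p where "p = Suc n"
    have p0: "0 < p" by (simp add: p_def)
    define pt where "pt x = (\<lambda>j. if j < m then real (x j) / real p else 0)" for x :: "nat \<Rightarrow> nat"
    define label where "label x i = (if x i = p then 1 else if x i = 0 then 0
        else if 0 < G i (\<Phi> (pt x)) then 0 else (1::nat))" for x i
    have ptC: "pt x \<in> C" if "\<forall>j<m. x j \<le> p" for x
      using that p0 by (auto simp: C_def pt_def)
    have lab0: "0 \<le> G i (\<Phi> (pt x))" if "label x i = 0" "\<forall>j<m. x j \<le> p" "i < m" for x i
    proof (cases "x i = 0")
      case True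
      then show ?thesis using f0 ptC[OF that(2)] that(3) by (auto simp: pt_def)
    next
      case False
      then show ?thesis using that(1) by (auto simp: label_def split: if_splits)
    qed
    have lab1: "G i (\<Phi> (pt x)) \<le> 0" if "label x i = 1" "\<forall>j<m. x j \<le> p" "i < m" for x i
    proof (cases "x i = p")
      case True
      then show ?thesis using f1 ptC[OF that(2)] that(3) p0 by (auto simp: pt_def)
    next
      case False
      then show ?thesis using that(1) by (auto simp: label_def split: if_splits)
    qed
    obtain q where q1: "\<forall>i<m. q i < p"
      and q2: "\<forall>i<m. \<exists>r s. (\<forall>j<m. q j \<le> r j \<and> r j \<le> q j + 1) \<and> (\<forall>j<m. q j \<le> s j \<and> s j \<le> q j + 1) \<and> label r i \<noteq> label s i"
      by (rule kuhn_lemma[of p m label]) (use p0 in \<open>auto simp: label_def\<close>)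
    have close: "(\<Sum>j<m. \<bar>pt r j - pt q j\<bar>) \<le> real m / real (Suc n)"
      if "\<forall>j<m. q j \<le> r j \<and> r j \<le> q j + 1" for r
    proof -
      have "(\<Sum>j<m. \<bar>pt r j - pt q j\<bar>) \<le> (\<Sum>j<m. 1 / real p)"
      proof (rule sum_mono)
        fix j assume "j \<in> {..<m}"
        then have "q j \<le> r j" "r j \<le> q j + 1" using that by auto
        then have "\<bar>real (r j) - real (q j)\<bar> \<le> 1" by linarith
        then show "\<bar>pt r j - pt q j\<bar> \<le> 1 / real p"
          using \<open>j \<in> {..<m}\<close> p0 by (auto simp: pt_def diff_divide_distrib[symmetric] abs_divide divide_right_mono)
      qed
      then show ?thesis by (simp add: p_def)
    qed
    show ?thesis
    proof (rule bexI[of _ "pt q"], intro allI impI)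
      show "pt q \<in> C" using q1 by (intro ptC) (auto intro: less_imp_le)
      fix i assume i: "i < m"
      obtain r s where rs: "\<forall>j<m. q j \<le> r j \<and> r j \<le> q j + 1" "\<forall>j<m. q j \<le> s j \<and> s j \<le> q j + 1"
        "label r i \<noteq> label s i" using q2 i by blast
      have rp: "\<forall>j<m. r j \<le> p" "\<forall>j<m. s j \<le> p"
      proof (safe)
        fix j assume "j < m"
        then have "q j < p" "r j \<le> q j + 1" "s j \<le> q j + 1" using rs(1,2) q1 by auto
        then show "r j \<le> p" "s j \<le> p" by auto
      qed
      have l01: "label x i = 0 \<or> label x i = 1" for x by (auto simp: label_def)
      show "\<exists>a\<in>C. \<exists>b\<in>C. (\<Sum>j<m. \<bar>a j - pt q j\<bar>) \<le> real m / real (Suc n)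
        \<and> (\<Sum>j<m. \<bar>b j - pt q j\<bar>) \<le> real m / real (Suc n) \<and> 0 \<le> G i (\<Phi> a) \<and> G i (\<Phi> b) \<le> 0"
      proof (cases "label r i = 0")
        case True
        then have "label s i = 1" using rs(3) l01 by metis
        have "pt r \<in> C" "pt s \<in> C" using ptC rp by auto
        moreover have "0 \<le> G i (\<Phi> (pt r))" using lab0[OF True rp(1) i] .
        moreover have "G i (\<Phi> (pt s)) \<le> 0" using lab1[OF \<open>label s i = 1\<close> rp(2) i] .
        ultimately show ?thesis using close[OF rs(1)] close[OF rs(2)] by blast
      next
        case False
        then have "label r i = 1" "label s i = 0" using rs(3) l01 by metis+
        have "pt r \<in> C" "pt s \<in> C" using ptC rp by auto
        moreover have "0 \<le> G i (\<Phi> (pt s))" using lab0[OF \<open>label s i = 0\<close> rp(2) i] .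
        moreover have "G i (\<Phi> (pt r)) \<le> 0" using lab1[OF \<open>label r i = 1\<close> rp(1) i] .
        ultimately show ?thesis using close[OF rs(1)] close[OF rs(2)] by blast
      qed
    qed
  qed
  define P where "P n c = (\<forall>i<m. \<exists>a\<in>C. \<exists>b\<in>C. (\<Sum>j<m. \<bar>a j - c j\<bar>) \<le> real m / real (Suc n)
      \<and> (\<Sum>j<m. \<bar>b j - c j\<bar>) \<le> real m / real (Suc n) \<and> 0 \<le> G i (\<Phi> a) \<and> G i (\<Phi> b) \<le> 0)" for n c
  have "\<forall>n. \<exists>c. c \<in> C \<and> P n c" using step unfolding P_def by blast
  then have "\<exists>c. \<forall>n. c n \<in> C \<and> P n (c n)" by (rule choice)
  then obtain c where c: "\<And>n. c n \<in> C" and cab: "\<And>n. P n (c n)" by blast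
  have "seq_compact K" using K(1) by (rule compact_imp_seq_compact)
  then obtain z r where z: "z \<in> K" and r: "strict_mono r" and lim: "((\<Phi> \<circ> c) \<circ> r) \<longlonglongrightarrow> z"
    using c K(2) unfolding seq_compact_def by (metis comp_apply image_subset_iff)
  have bnd: "(\<lambda>n. L * (real m / real (Suc (r n)))) \<longlonglongrightarrow> 0"
  proof -
    have "(\<lambda>n. real m / real (Suc (r n))) \<longlonglongrightarrow> 0"
    proof (rule tendsto_sandwich[of "\<lambda>n. 0" _ _ "\<lambda>n. real m / real (Suc n)"])
      show "\<forall>\<^sub>F n in sequentially. real m / real (Suc (r n)) \<le> real m / real (Suc n)"
      proof (rule always_eventually, rule allI)
        fix n
        have "real n \<le> real (r n)" using seq_suble[OF r] by simp
        then show "real m / real (Suc (r n)) \<le> real m / real (Suc n)"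
          by (intro divide_left_mono) auto
      qed
      show "(\<lambda>n. real m / real (Suc n)) \<longlonglongrightarrow> 0"
        using LIMSEQ_Suc[OF lim_const_over_n[of "real m"]] by simp
    qed auto
    then show ?thesis using tendsto_mult_right_zero by blast
  qed
  have conv: "(\<lambda>n. \<Phi> (h n)) \<longlonglongrightarrow> z" if hC: "\<And>n. h n \<in> C"
    and hb: "\<And>n. (\<Sum>j<m. \<bar>h n j - c (r n) j\<bar>) \<le> real m / real (Suc (r n))" for h
  proof -
    have d1: "(\<lambda>n. dist (\<Phi> (c (r n))) z) \<longlonglongrightarrow> 0"
      using lim unfolding o_def by (subst (asm) tendsto_dist_iff)
    have "(\<lambda>n. dist (\<Phi> (h n)) z) \<longlonglongrightarrow> 0"
    proof (rule tendsto_sandwich[of "\<lambda>n. 0" _ _ "\<lambda>n. L * (real m / real (Suc (r n))) + dist (\<Phi> (c (r n))) z"])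
      show "\<forall>\<^sub>F n in sequentially. dist (\<Phi> (h n)) z \<le> L * (real m / real (Suc (r n))) + dist (\<Phi> (c (r n))) z"
      proof (rule always_eventually, rule allI)
        fix n
        have "dist (\<Phi> (h n)) z \<le> dist (\<Phi> (h n)) (\<Phi> (c (r n))) + dist (\<Phi> (c (r n))) z"
          by (rule dist_triangle)
        moreover have "dist (\<Phi> (h n)) (\<Phi> (c (r n))) \<le> L * (real m / real (Suc (r n)))"
          using L hC c hb L0 by (meson mult_left_mono order_trans)
        ultimately show "dist (\<Phi> (h n)) z \<le> L * (real m / real (Suc (r n))) + dist (\<Phi> (c (r n))) z"
          by linarith
      qed
      show "(\<lambda>n. L * (real m / real (Suc (r n))) + dist (\<Phi> (c (r n))) z) \<longlonglongrightarrow> 0"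
        using tendsto_add[OF bnd d1] by simp
    qed auto
    then show ?thesis using tendsto_dist_iff by blast
  qed
  show ?thesis
  proof (intro bexI[OF _ z] allI impI)
    fix i assume i: "i < m"
    obtain a b where ab: "\<And>n. a n \<in> C" "\<And>n. b n \<in> C"
      "\<And>n. (\<Sum>j<m. \<bar>a n j - c (r n) j\<bar>) \<le> real m / real (Suc (r n))"
      "\<And>n. (\<Sum>j<m. \<bar>b n j - c (r n) j\<bar>) \<le> real m / real (Suc (r n))"
      "\<And>n. 0 \<le> G i (\<Phi> (a n))" "\<And>n. G i (\<Phi> (b n)) \<le> 0"
    proof -
      have "\<forall>n. \<exists>a b. a \<in> C \<and> b \<in> C \<and> (\<Sum>j<m. \<bar>a j - c (r n) j\<bar>) \<le> real m / real (Suc (r n))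
        \<and> (\<Sum>j<m. \<bar>b j - c (r n) j\<bar>) \<le> real m / real (Suc (r n)) \<and> 0 \<le> G i (\<Phi> a) \<and> G i (\<Phi> b) \<le> 0"
        using cab i unfolding P_def by blast
      then have "\<exists>a. \<forall>n. \<exists>b. a n \<in> C \<and> b \<in> C \<and> (\<Sum>j<m. \<bar>a n j - c (r n) j\<bar>) \<le> real m / real (Suc (r n))
        \<and> (\<Sum>j<m. \<bar>b j - c (r n) j\<bar>) \<le> real m / real (Suc (r n)) \<and> 0 \<le> G i (\<Phi> (a n)) \<and> G i (\<Phi> b) \<le> 0"
        by (rule choice)
      then obtain a where "\<forall>n. \<exists>b. a n \<in> C \<and> b \<in> C \<and> (\<Sum>j<m. \<bar>a n j - c (r n) j\<bar>) \<le> real m / real (Suc (r n))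
        \<and> (\<Sum>j<m. \<bar>b j - c (r n) j\<bar>) \<le> real m / real (Suc (r n)) \<and> 0 \<le> G i (\<Phi> (a n)) \<and> G i (\<Phi> b) \<le> 0" by blast
      then have "\<exists>b. \<forall>n. a n \<in> C \<and> b n \<in> C \<and> (\<Sum>j<m. \<bar>a n j - c (r n) j\<bar>) \<le> real m / real (Suc (r n))
        \<and> (\<Sum>j<m. \<bar>b n j - c (r n) j\<bar>) \<le> real m / real (Suc (r n)) \<and> 0 \<le> G i (\<Phi> (a n)) \<and> G i (\<Phi> (b n)) \<le> 0"
        by (rule choice)
      then show ?thesis using that by blast
    qed
    have ca: "(\<lambda>n. G i (\<Phi> (a n))) \<longlonglongrightarrow> G i z"
      by (rule continuous_on_tendsto_compose[OF _ conv[OF ab(1,3)]])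
         (use cont i z K(2) ab(1) in \<open>auto intro!: always_eventually\<close>)
    have cb: "(\<lambda>n. G i (\<Phi> (b n))) \<longlonglongrightarrow> G i z"
      by (rule continuous_on_tendsto_compose[OF _ conv[OF ab(2,4)]])
         (use cont i z K(2) ab(2) in \<open>auto intro!: always_eventually\<close>)
    have "0 \<le> G i z" using LIMSEQ_le_const[OF ca] ab(5) by blast
    moreover have "G i z \<le> 0" using LIMSEQ_le_const2[OF cb] ab(6) by blast
    ultimately show "G i z = 0" by simp
  qed
qed



definition goodset :: "('a::real_normed_vector \<Rightarrow> real) set \<Rightarrow> bool" where
  "goodset A \<longleftrightarrow> A \<noteq> {} \<and> (\<forall>p\<in>A. bounded_linear p) \<and> (\<forall>u. bdd_above ((\<lambda>p. p u) ` A))"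

lemma supp_upper: "goodset A \<Longrightarrow> p \<in> A \<Longrightarrow> p u \<le> supp A u"
  unfolding goodset_def supp_def by (auto intro: cSUP_upper)

lemma supp_least: "A \<noteq> {} \<Longrightarrow> (\<And>p. p \<in> A \<Longrightarrow> p u \<le> B) \<Longrightarrow> supp A u \<le> B"
  unfolding supp_def by (auto intro: cSUP_least)

lemma supp_add: assumes "goodset A" shows "supp A (u + w) \<le> supp A u + supp A w"
proof (rule supp_least)
  show "A \<noteq> {}" using assms by (simp add: goodset_def)
  fix p assume p: "p \<in> A"
  then have "p (u + w) = p u + p w" using assms by (simp add: goodset_def linear_simps)
  then show "p (u + w) \<le> supp A u + supp A w"
    using supp_upper[OF assms p, of u] supp_upper[OF assms p, of w] by simp
qed

lemma supp_scale: assumes "goodset A" "0 \<le> c" shows "supp A (c *\<^sub>R u) \<le> c * supp A u"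
proof (rule supp_least)
  show "A \<noteq> {}" using assms by (simp add: goodset_def)
  fix p assume p: "p \<in> A"
  then have "p (c *\<^sub>R u) = c * p u" using assms by (simp add: goodset_def linear_simps)
  then show "p (c *\<^sub>R u) \<le> c * supp A u"
    using supp_upper[OF assms(1) p, of u] assms(2) by (simp add: mult_left_mono)
qed

lemma supp_zero: assumes "goodset A" shows "supp A 0 = 0"
proof -
  have "\<forall>p\<in>A. p 0 = 0" using assms by (simp add: goodset_def linear_simps)
  then have "(\<lambda>p. p 0) ` A = {0}" using assms by (auto simp: goodset_def)
  then show ?thesis by (simp add: supp_def)
qed

lemma supp_sum: assumes "goodset A" "finite F"
  shows "supp A (\<Sum>k\<in>F. u k) \<le> (\<Sum>k\<in>F. supp A (u k))"
  using assms(2)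
proof (induction F rule: finite_induct)
  case empty then show ?case using supp_zero[OF assms(1)] by simp
next
  case (insert x F)
  then show ?case using supp_add[OF assms(1), of "u x" "sum u F"] by simp
qed

lemma supp_scale_abs: assumes "goodset A"
  shows "supp A (c *\<^sub>R u) \<le> \<bar>c\<bar> * max (supp A u) (supp A (-u))"
proof (cases "0 \<le> c")
  case True
  then have "supp A (c *\<^sub>R u) \<le> c * supp A u" by (rule supp_scale[OF assms])
  also have "\<dots> \<le> \<bar>c\<bar> * max (supp A u) (supp A (-u))" using True by (simp add: mult_left_mono)
  finally show ?thesis .
next
  case False
  then have "c *\<^sub>R u = \<bar>c\<bar> *\<^sub>R (-u)" by simp
  then have "supp A (c *\<^sub>R u) \<le> \<bar>c\<bar> * supp A (-u)" using supp_scale[OF assms, of "\<bar>c\<bar>" "-u"] by simp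
  also have "\<dots> \<le> \<bar>c\<bar> * max (supp A u) (supp A (-u))" by (simp add: mult_left_mono)
  finally show ?thesis .
qed

lemma cwc_bounded: assumes "cwc_set A" shows "bounded ((\<lambda>p. p u) ` A)"
proof -
  have "compact A" using assms by (simp add: cwc_set_def)
  moreover have "continuous_on A (\<lambda>p. p u)"
    by (rule continuous_on_subset[OF continuous_on_product_coordinates subset_UNIV])
  ultimately show ?thesis using compact_continuous_image compact_imp_bounded by blast
qed

lemma cwc_bl: "cwc_set A \<Longrightarrow> p \<in> A \<Longrightarrow> bounded_linear p"
  by (auto simp: cwc_set_def dual_space_def)

lemma cwc_bdd_above: "cwc_set A \<Longrightarrow> bdd_above ((\<lambda>p. p u) ` A)"
  by (rule bounded_imp_bdd_above[OF cwc_bounded])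

lemma cwc_bdd_below: "cwc_set A \<Longrightarrow> bdd_below ((\<lambda>p. p u) ` A)"
  by (rule bounded_imp_bdd_below[OF cwc_bounded])

lemma good_mink1: assumes "cwc_set A" "bounded_linear y"
  shows "goodset (mink_plus A {y})"
  unfolding goodset_def
proof (intro conjI allI ballI)
  show "mink_plus A {y} \<noteq> {}" using assms by (auto simp: cwc_set_def mink_plus_def)
  fix q assume "q \<in> mink_plus A {y}"
  then obtain a where a: "a \<in> A" "q = (\<lambda>v. a v + y v)" by (auto simp: mink_plus_def)
  then show "bounded_linear q" using cwc_bl[OF assms(1) a(1)] assms(2) by (simp add: bounded_linear_add)
next
  fix u
  obtain B where B: "\<And>a. a \<in> A \<Longrightarrow> a u \<le> B" using cwc_bdd_above[OF assms(1), of u]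
    by (auto simp: bdd_above_def)
  show "bdd_above ((\<lambda>p. p u) ` mink_plus A {y})"
    by (rule bdd_aboveI[of _ "B + y u"]) (auto simp: mink_plus_def dest: B)
qed

lemma good_mink2: assumes "cwc_set A" "bounded_linear x"
  shows "goodset (mink_plus {\<lambda>u. - x u} (fun_uminus_set A))"
  unfolding goodset_def
proof (intro conjI allI ballI)
  show "mink_plus {\<lambda>u. - x u} (fun_uminus_set A) \<noteq> {}"
    using assms by (auto simp: cwc_set_def mink_plus_def fun_uminus_set_def)
  fix q assume "q \<in> mink_plus {\<lambda>u. - x u} (fun_uminus_set A)"
  then obtain a where a: "a \<in> A" "q = (\<lambda>v. - x v + - a v)" unfolding mink_plus_def fun_uminus_set_def by blast
  then show "bounded_linear q" using cwc_bl[OF assms(1) a(1)] assms(2)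
    by (simp add: bounded_linear_sub bounded_linear_minus)
next
  fix u
  obtain B where B: "\<And>a. a \<in> A \<Longrightarrow> B \<le> a u" using cwc_bdd_below[OF assms(1), of u]
    by (auto simp: bdd_below_def)
  show "bdd_above ((\<lambda>p. p u) ` mink_plus {\<lambda>u. - x u} (fun_uminus_set A))"
    by (rule bdd_aboveI[of _ "- x u - B"]) (auto simp: mink_plus_def fun_uminus_set_def dest: B)
qed

lemma qd_upper: assumes "quasidiff f x Dl Du" "y \<in> Du"
  shows "dir_deriv f x u \<le> supp (mink_plus Dl {y}) u"
proof -
  have cl: "cwc_set Dl" and cu: "cwc_set Du" using assms by (auto simp: quasidiff_def)
  have eq: "dir_deriv f x u = (SUP p\<in>Dl. p u) + (INF q\<in>Du. q u)" using assms by (simp add: quasidiff_def)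
  have "(INF q\<in>Du. q u) \<le> y u" using cwc_bdd_below[OF cu] assms(2) by (auto intro: cINF_lower)
  moreover have "(SUP p\<in>Dl. p u) \<le> supp (mink_plus Dl {y}) u - y u"
  proof (rule cSUP_least)
    show "Dl \<noteq> {}" using cl by (simp add: cwc_set_def)
    fix p assume "p \<in> Dl"
    then have "(\<lambda>v. p v + y v) \<in> mink_plus Dl {y}" by (auto simp: mink_plus_def)
    then have "p u + y u \<le> supp (mink_plus Dl {y}) u"
      using supp_upper[OF good_mink1[OF cl cwc_bl[OF cu assms(2)]]] by fastforce
    then show "p u \<le> supp (mink_plus Dl {y}) u - y u" by simp
  qed
  ultimately show ?thesis using eq by linarith
qed

lemma qd_lower: assumes "quasidiff f x Dl Du" "xx \<in> Dl"
  shows "- dir_deriv f x u \<le> supp (mink_plus {\<lambda>u. - xx u} (fun_uminus_set Du)) u"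
proof -
  let ?S = "supp (mink_plus {\<lambda>u. - xx u} (fun_uminus_set Du)) u"
  have cl: "cwc_set Dl" and cu: "cwc_set Du" using assms by (auto simp: quasidiff_def)
  have eq: "dir_deriv f x u = (SUP p\<in>Dl. p u) + (INF q\<in>Du. q u)" using assms by (simp add: quasidiff_def)
  have "xx u \<le> (SUP p\<in>Dl. p u)" using cwc_bdd_above[OF cl] assms(2) by (auto intro: cSUP_upper)
  moreover have "- ?S - xx u \<le> (INF q\<in>Du. q u)"
  proof (rule cINF_greatest)
    show "Du \<noteq> {}" using cu by (simp add: cwc_set_def)
    fix q assume "q \<in> Du"
    then have qm: "(\<lambda>v. - q v) \<in> fun_uminus_set Du" by (auto simp: fun_uminus_set_def)
    have "(\<lambda>v. - xx v + - q v) \<in> mink_plus {\<lambda>u. - xx u} (fun_uminus_set Du)"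
      unfolding mink_plus_def
      by (intro CollectI exI[of _ "\<lambda>u. - xx u"] exI[of _ "\<lambda>v. - q v"] conjI) (use qm in auto)
    then have "- xx u + - q u \<le> ?S"
      using supp_upper[OF good_mink2[OF cu cwc_bl[OF cl assms(2)]]] by fastforce
    then show "- ?S - xx u \<le> q u" by simp
  qed
  ultimately show ?thesis using eq by linarith
qed

lemma supp_est:
  assumes A: "goodset A" and h: "0 \<le> \<eta>" "0 \<le> \<epsilon>" "finite F" "\<forall>j\<in>F. 0 \<le> a j \<and> 0 \<le> b j"
  shows "supp A (v + \<eta> *\<^sub>R v0 + \<epsilon> *\<^sub>R (\<Sum>j\<in>F. a j *\<^sub>R V j + b j *\<^sub>R W j))
    \<le> supp A v + \<eta> * supp A v0 + \<epsilon> * (\<Sum>j\<in>F. a j * supp A (V j) + b j * supp A (W j))"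
proof -
  have s1: "supp A (\<Sum>j\<in>F. a j *\<^sub>R V j + b j *\<^sub>R W j) \<le> (\<Sum>j\<in>F. supp A (a j *\<^sub>R V j + b j *\<^sub>R W j))"
    by (rule supp_sum[OF A h(3)])
  also have "\<dots> \<le> (\<Sum>j\<in>F. a j * supp A (V j) + b j * supp A (W j))"
  proof (rule sum_mono)
    fix j assume "j \<in> F"
    then have "0 \<le> a j" "0 \<le> b j" using h(4) by auto
    then show "supp A (a j *\<^sub>R V j + b j *\<^sub>R W j) \<le> a j * supp A (V j) + b j * supp A (W j)"
      using supp_add[OF A, of "a j *\<^sub>R V j" "b j *\<^sub>R W j"] supp_scale[OF A, of "a j" "V j"]
        supp_scale[OF A, of "b j" "W j"] by linarith
  qed
  finally have s2: "supp A (\<Sum>j\<in>F. a j *\<^sub>R V j + b j *\<^sub>R W j) \<le> (\<Sum>j\<in>F. a j * supp A (V j) + b j * supp A (W j))" .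
  have "supp A (v + \<eta> *\<^sub>R v0 + \<epsilon> *\<^sub>R (\<Sum>j\<in>F. a j *\<^sub>R V j + b j *\<^sub>R W j))
      \<le> supp A (v + \<eta> *\<^sub>R v0) + supp A (\<epsilon> *\<^sub>R (\<Sum>j\<in>F. a j *\<^sub>R V j + b j *\<^sub>R W j))"
    by (rule supp_add[OF A])
  also have "\<dots> \<le> supp A v + \<eta> * supp A v0 + \<epsilon> * supp A (\<Sum>j\<in>F. a j *\<^sub>R V j + b j *\<^sub>R W j)"
    using supp_add[OF A, of v "\<eta> *\<^sub>R v0"] supp_scale[OF A h(1), of v0] supp_scale[OF A h(2), of "\<Sum>j\<in>F. a j *\<^sub>R V j + b j *\<^sub>R W j"] by linarith
  also have "\<dots> \<le> supp A v + \<eta> * supp A v0 + \<epsilon> * (\<Sum>j\<in>F. a j * supp A (V j) + b j * supp A (W j))"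
    using mult_left_mono[OF s2 h(2)] by linarith
  finally show ?thesis .
qed

lemma supp_est2:
  assumes A: "goodset A" and h: "0 \<le> \<epsilon>" "finite F"
    and bd: "\<forall>j\<in>F. max (supp A (V j)) (supp A (- V j)) \<le> Sb \<and> max (supp A (W j)) (supp A (- W j)) \<le> Sb"
  shows "supp A (\<epsilon> *\<^sub>R (\<Sum>j\<in>F. da j *\<^sub>R V j + db j *\<^sub>R W j)) \<le> \<epsilon> * (Sb * (\<Sum>j\<in>F. \<bar>da j\<bar> + \<bar>db j\<bar>))"
proof -
  have "supp A (\<Sum>j\<in>F. da j *\<^sub>R V j + db j *\<^sub>R W j) \<le> (\<Sum>j\<in>F. supp A (da j *\<^sub>R V j + db j *\<^sub>R W j))"
    by (rule supp_sum[OF A h(2)])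
  also have "\<dots> \<le> (\<Sum>j\<in>F. Sb * (\<bar>da j\<bar> + \<bar>db j\<bar>))"
  proof (rule sum_mono)
    fix j assume j: "j \<in> F"
    have "supp A (da j *\<^sub>R V j) \<le> \<bar>da j\<bar> * Sb"
      using supp_scale_abs[OF A, of "da j" "V j"] bd j
      by (meson abs_ge_zero mult_left_mono order_trans)
    moreover have "supp A (db j *\<^sub>R W j) \<le> \<bar>db j\<bar> * Sb"
      using supp_scale_abs[OF A, of "db j" "W j"] bd j
      by (meson abs_ge_zero mult_left_mono order_trans)
    ultimately show "supp A (da j *\<^sub>R V j + db j *\<^sub>R W j) \<le> Sb * (\<bar>da j\<bar> + \<bar>db j\<bar>)"
      using supp_add[OF A, of "da j *\<^sub>R V j" "db j *\<^sub>R W j"] by (simp add: algebra_simps)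
  qed
  also have "\<dots> = Sb * (\<Sum>j\<in>F. \<bar>da j\<bar> + \<bar>db j\<bar>)" by (simp add: sum_distrib_left)
  finally have "supp A (\<Sum>j\<in>F. da j *\<^sub>R V j + db j *\<^sub>R W j) \<le> Sb * (\<Sum>j\<in>F. \<bar>da j\<bar> + \<bar>db j\<bar>)" .
  then show ?thesis using supp_scale[OF A h(1)] mult_left_mono[OF _ h(1)] by (meson order_trans)
qed

lemma fin_pos_lower:
  fixes h :: "'x \<Rightarrow> real"
  assumes "finite F" "\<forall>x\<in>F. 0 < h x"
  shows "\<exists>c>0. \<forall>x\<in>F. c \<le> h x"
  using assms
proof (induction F rule: finite_induct)
  case empty have "(1::real) > 0" by simp
  then show ?case by blast
next
  case (insert y F)
  then obtain c where "c > 0" "\<forall>x\<in>F. c \<le> h x" by auto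
  then show ?case using insert.prems by (intro exI[of _ "min c (h y)"]) auto
qed

lemma fin_upper:
  fixes h :: "'x \<Rightarrow> real"
  assumes "finite F"
  shows "\<exists>B\<ge>0. \<forall>x\<in>F. h x \<le> B"
  using assms
proof (induction F rule: finite_induct)
  case empty have "(0::real) \<ge> 0" by simp
  then show ?case by blast
next
  case (insert y F)
  then obtain B where "B \<ge> 0" "\<forall>x\<in>F. h x \<le> B" by auto
  then show ?case by (intro exI[of _ "max B (h y)"]) auto
qed

lemma fin_delta:
  fixes P :: "'x \<Rightarrow> real \<Rightarrow> bool"
  assumes "finite F" "\<forall>s\<in>F. \<exists>\<delta>>0. P s \<delta>"
    and mono: "\<And>s \<delta> \<delta>'. P s \<delta> \<Longrightarrow> 0 < \<delta>' \<Longrightarrow> \<delta>' \<le> \<delta> \<Longrightarrow> P s \<delta>'"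
  shows "\<exists>\<delta>>0. \<forall>s\<in>F. P s \<delta>"
  using assms(1,2)
proof (induction F rule: finite_induct)
  case empty have "(1::real) > 0" by simp
  then show ?case by blast
next
  case (insert y F)
  then obtain d where d: "d > 0" "\<forall>x\<in>F. P x d" by auto
  obtain d' where d': "d' > 0" "P y d'" using insert.prems by auto
  show ?case
  proof (intro exI[of _ "min d d'"] conjI ballI)
    fix s assume "s \<in> insert y F"
    then show "P s (min d d')" using d d' by (auto intro: mono)
  qed (use d d' in auto)
qed



definition ap :: "real \<Rightarrow> real" where "ap r = max 0 (2*r - 1)"
definition bp :: "real \<Rightarrow> real" where "bp r = max 0 (1 - 2*r)"
definition phi :: "nat \<Rightarrow> 'a \<Rightarrow> 'a \<Rightarrow> (nat \<Rightarrow> 'a) \<Rightarrow> (nat \<Rightarrow> 'a) \<Rightarrow> real \<Rightarrow> real \<Rightarrow> (nat \<Rightarrow> real) \<Rightarrow> 'a::real_normed_vector" where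
  "phi m v v0 V W \<eta> \<epsilon> t = v + \<eta> *\<^sub>R v0 + \<epsilon> *\<^sub>R (\<Sum>j<m. ap (t j) *\<^sub>R V j + bp (t j) *\<^sub>R W j)"
definition cube :: "nat \<Rightarrow> (nat \<Rightarrow> real) set" where
  "cube m = {t. \<forall>j. t j \<in> (if j < m then {0..1} else {0})}"

lemma ap_bp: "0 \<le> ap r" "0 \<le> bp r" "r \<le> 1 \<Longrightarrow> ap r \<le> 1" "0 \<le> r \<Longrightarrow> bp r \<le> 1"
  "ap 1 = 1" "bp 1 = 0" "ap 0 = 0" "bp 0 = 1"
  "\<bar>ap r - ap s\<bar> \<le> 2 * \<bar>r - s\<bar>" "\<bar>bp r - bp s\<bar> \<le> 2 * \<bar>r - s\<bar>"
  by (auto simp: ap_def bp_def max_def abs_if)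

lemma cube_mem: "t \<in> cube m \<Longrightarrow> j < m \<Longrightarrow> 0 \<le> t j \<and> t j \<le> 1"
  by (auto simp: cube_def dest: spec[of _ j])

lemma cube_compact: "compact (cube m)"
proof -
  have eq: "cube m = PiE UNIV (\<lambda>j. if j < m then {0..1} else {0::real})"
    by (auto simp: cube_def PiE_def extensional_def Pi_def)
  have "compactin (product_topology (\<lambda>_. euclidean) UNIV) (PiE UNIV (\<lambda>j. if j < m then {0..1} else {0::real}))"
    by (subst compactin_PiE) (auto simp: compactin_euclidean_iff)
  then show ?thesis unfolding eq euclidean_product_topology compactin_euclidean_iff .
qed

lemma cube_ne: "(\<lambda>_. 0) \<in> cube m"
  by (auto simp: cube_def)

lemma phi_cont: "continuous_on UNIV (phi m v v0 V W \<eta> \<epsilon>)"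
  unfolding phi_def ap_def bp_def
  by (intro continuous_intros continuous_on_product_coordinates)

lemma phi_diff: "phi m v v0 V W \<eta> \<epsilon> t - phi m v v0 V W \<eta> \<epsilon> t'
   = \<epsilon> *\<^sub>R (\<Sum>j<m. (ap (t j) - ap (t' j)) *\<^sub>R V j + (bp (t j) - bp (t' j)) *\<^sub>R W j)"
proof -
  have "(\<Sum>j<m. (ap (t j) - ap (t' j)) *\<^sub>R V j + (bp (t j) - bp (t' j)) *\<^sub>R W j)
      = (\<Sum>j<m. ap (t j) *\<^sub>R V j + bp (t j) *\<^sub>R W j) - (\<Sum>j<m. ap (t' j) *\<^sub>R V j + bp (t' j) *\<^sub>R W j)"
    by (simp add: sum_subtractf[symmetric] scaleR_diff_left algebra_simps)
  then show ?thesis by (simp add: phi_def scaleR_diff_right)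
qed

lemma phi_span: "phi m v v0 V W \<eta> \<epsilon> t - phi m v v0 V W \<eta> \<epsilon> t' \<in> span (V ` {..<m} \<union> W ` {..<m})"
  unfolding phi_diff
  by (intro span_scale span_sum span_add) (auto intro: span_base)

lemma phi_lip:
  assumes "0 \<le> \<epsilon>"
  shows "norm (phi m v v0 V W \<eta> \<epsilon> t - phi m v v0 V W \<eta> \<epsilon> t')
    \<le> (2 * \<epsilon> * (\<Sum>j<m. norm (V j) + norm (W j))) * (\<Sum>j<m. \<bar>t j - t' j\<bar>)"
proof -
  let ?N = "\<Sum>j<m. norm (V j) + norm (W j)"
  have N: "norm (V j) + norm (W j) \<le> ?N" if "j < m" for j
    using that by (intro member_le_sum) auto
  have "norm (\<Sum>j<m. (ap (t j) - ap (t' j)) *\<^sub>R V j + (bp (t j) - bp (t' j)) *\<^sub>R W j)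
      \<le> (\<Sum>j<m. norm ((ap (t j) - ap (t' j)) *\<^sub>R V j + (bp (t j) - bp (t' j)) *\<^sub>R W j))"
    by (rule norm_sum)
  also have "\<dots> \<le> (\<Sum>j<m. 2 * ?N * \<bar>t j - t' j\<bar>)"
  proof (rule sum_mono)
    fix j assume j: "j \<in> {..<m}"
    have "norm ((ap (t j) - ap (t' j)) *\<^sub>R V j + (bp (t j) - bp (t' j)) *\<^sub>R W j)
        \<le> \<bar>ap (t j) - ap (t' j)\<bar> * norm (V j) + \<bar>bp (t j) - bp (t' j)\<bar> * norm (W j)"
      using norm_triangle_ineq by (metis norm_scaleR)
    also have "\<dots> \<le> (2 * \<bar>t j - t' j\<bar>) * norm (V j) + (2 * \<bar>t j - t' j\<bar>) * norm (W j)"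
      by (intro add_mono mult_right_mono ap_bp) auto
    also have "\<dots> = 2 * \<bar>t j - t' j\<bar> * (norm (V j) + norm (W j))" by (simp add: algebra_simps)
    also have "\<dots> \<le> 2 * \<bar>t j - t' j\<bar> * ?N" using N j by (intro mult_left_mono) auto
    finally show "norm ((ap (t j) - ap (t' j)) *\<^sub>R V j + (bp (t j) - bp (t' j)) *\<^sub>R W j) \<le> 2 * ?N * \<bar>t j - t' j\<bar>"
      by (simp add: algebra_simps)
  qed
  also have "\<dots> = 2 * ?N * (\<Sum>j<m. \<bar>t j - t' j\<bar>)" by (simp add: sum_distrib_left)
  finally have "norm (\<Sum>j<m. (ap (t j) - ap (t' j)) *\<^sub>R V j + (bp (t j) - bp (t' j)) *\<^sub>R W j) \<le> 2 * ?N * (\<Sum>j<m. \<bar>t j - t' j\<bar>)" .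
  from mult_left_mono[OF this assms]
  show ?thesis unfolding phi_diff using assms by (simp add: mult.assoc)
qed

lemma phi_norm:
  assumes "t \<in> cube m" "0 \<le> \<eta>" "0 \<le> \<epsilon>"
  shows "norm (phi m v v0 V W \<eta> \<epsilon> t - v) \<le> \<eta> * norm v0 + \<epsilon> * (\<Sum>j<m. norm (V j) + norm (W j))"
proof -
  have "norm (\<Sum>j<m. ap (t j) *\<^sub>R V j + bp (t j) *\<^sub>R W j) \<le> (\<Sum>j<m. norm (ap (t j) *\<^sub>R V j + bp (t j) *\<^sub>R W j))"
    by (rule norm_sum)
  also have "\<dots> \<le> (\<Sum>j<m. norm (V j) + norm (W j))"
  proof (rule sum_mono)
    fix j assume j: "j \<in> {..<m}"
    then have tj: "0 \<le> t j" "t j \<le> 1" using cube_mem[OF assms(1)] by auto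
    have "norm (ap (t j) *\<^sub>R V j + bp (t j) *\<^sub>R W j) \<le> \<bar>ap (t j)\<bar> * norm (V j) + \<bar>bp (t j)\<bar> * norm (W j)"
      using norm_triangle_ineq by (metis norm_scaleR)
    also have "\<dots> \<le> 1 * norm (V j) + 1 * norm (W j)"
      using tj ap_bp(1-4)[of "t j"] by (intro add_mono mult_right_mono) auto
    finally show "norm (ap (t j) *\<^sub>R V j + bp (t j) *\<^sub>R W j) \<le> norm (V j) + norm (W j)" by simp
  qed
  finally have S: "norm (\<Sum>j<m. ap (t j) *\<^sub>R V j + bp (t j) *\<^sub>R W j) \<le> (\<Sum>j<m. norm (V j) + norm (W j))" .
  have "norm (phi m v v0 V W \<eta> \<epsilon> t - v) = norm (\<eta> *\<^sub>R v0 + \<epsilon> *\<^sub>R (\<Sum>j<m. ap (t j) *\<^sub>R V j + bp (t j) *\<^sub>R W j))"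
    by (simp add: phi_def)
  also have "\<dots> \<le> \<eta> * norm v0 + \<epsilon> * norm (\<Sum>j<m. ap (t j) *\<^sub>R V j + bp (t j) *\<^sub>R W j)"
    using assms(2,3) norm_triangle_ineq[of "\<eta> *\<^sub>R v0" "\<epsilon> *\<^sub>R (\<Sum>j<m. ap (t j) *\<^sub>R V j + bp (t j) *\<^sub>R W j)"]
    by simp
  also have "\<dots> \<le> \<eta> * norm v0 + \<epsilon> * (\<Sum>j<m. norm (V j) + norm (W j))"
    using S assms(3) by (simp add: mult_left_mono)
  finally show ?thesis .
qed



lemma sum_le_single:
  fixes T :: "nat \<Rightarrow> real"
  assumes "i < m" "\<forall>k<m. k \<noteq> i \<longrightarrow> T k \<le> 0"
  shows "(\<Sum>k<m. T k) \<le> T i"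
proof -
  have "(\<Sum>k<m. T k) = T i + (\<Sum>k\<in>{..<m} - {i}. T k)"
    using assms(1) by (simp add: sum.remove)
  moreover have "(\<Sum>k\<in>{..<m} - {i}. T k) \<le> 0" using assms(2) by (intro sum_nonpos) auto
  ultimately show ?thesis by simp
qed

lemma max_abs_le: "max (a::real) b \<le> \<bar>a\<bar> + \<bar>b\<bar>"
  unfolding max_def using abs_ge_self[of a] abs_ge_self[of b] abs_ge_zero[of a] abs_ge_zero[of b] by auto

lemma sum8_gen:
  fixes a1 a2 a3 a4 a5 a6 a7 a8 b1 b2 b3 b4 b5 b6 b7 b8 :: real
  assumes "b1 + b2 + b3 + b4 + b5 + b6 + b7 + b8 \<le> B"
    "a1 \<le> b1" "a2 \<le> b2" "a3 \<le> b3" "a4 \<le> b4" "a5 \<le> b5" "a6 \<le> b6" "a7 \<le> b7" "a8 \<le> b8"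
    "0 \<le> b1" "0 \<le> b2" "0 \<le> b3" "0 \<le> b4" "0 \<le> b5" "0 \<le> b6" "0 \<le> b7" "0 \<le> b8"
  shows "a1 \<le> B \<and> a2 \<le> B \<and> a3 \<le> B \<and> a4 \<le> B \<and> a5 \<le> B \<and> a6 \<le> B \<and> a7 \<le> B \<and> a8 \<le> B"
  using assms by linarith

lemma abs8:
  fixes a1 a2 a3 a4 a5 a6 a7 a8 :: real
  assumes "\<bar>a1\<bar> + \<bar>a2\<bar> + \<bar>a3\<bar> + \<bar>a4\<bar> + \<bar>a5\<bar> + \<bar>a6\<bar> + \<bar>a7\<bar> + \<bar>a8\<bar> \<le> B"
  shows "max a1 a2 \<le> B \<and> max a3 a4 \<le> B \<and> max a5 a6 \<le> B \<and> max a7 a8 \<le> B"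
proof -
  have "a1 \<le> B \<and> a2 \<le> B \<and> a3 \<le> B \<and> a4 \<le> B \<and> a5 \<le> B \<and> a6 \<le> B \<and> a7 \<le> B \<and> a8 \<le> B"
    by (rule sum8_gen[OF assms abs_ge_self abs_ge_self abs_ge_self abs_ge_self abs_ge_self abs_ge_self abs_ge_self abs_ge_self
      abs_ge_zero abs_ge_zero abs_ge_zero abs_ge_zero abs_ge_zero abs_ge_zero abs_ge_zero abs_ge_zero])
  then show ?thesis by simp
qed

lemma core:
  fixes F H :: "nat \<Rightarrow> 'a::banach \<Rightarrow> real" and x v v0 :: 'a and V W :: "nat \<Rightarrow> 'a"
    and A1 A2 AH :: "nat \<Rightarrow> ('a \<Rightarrow> real) set" and Jg :: "nat set" and Pn :: "'a \<Rightarrow> bool"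
  assumes fin: "finite Jg"
    and g1: "\<forall>j<m. goodset (A1 j) \<and> goodset (A2 j)" and g2: "\<forall>j\<in>Jg. goodset (AH j)"
    and dF: "\<forall>j<m. \<forall>u. dir_deriv (F j) x u \<le> supp (A1 j) u \<and> - dir_deriv (F j) x u \<le> supp (A2 j) u"
    and dH: "\<forall>j\<in>Jg. \<forall>u. dir_deriv (H j) x u \<le> supp (AH j) u"
    and uF: "\<forall>j<m. dir_diff_unif (F j) x" and uH: "\<forall>j\<in>Jg. dir_diff_unif (H j) x"
    and F0: "\<forall>j<m. F j x = 0" and H0: "\<forall>j\<in>Jg. H j x = 0"
    and Fc: "\<forall>j<m. \<exists>U. open U \<and> x \<in> U \<and> continuous_on U (F j)"
    and Pn: "\<exists>r>0. \<forall>y. dist y x < r \<longrightarrow> Pn y"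
    and cv1: "\<forall>j<m. supp (A1 j) v \<le> 0 \<and> supp (A2 j) v \<le> 0" and cv2: "\<forall>j\<in>Jg. supp (AH j) v \<le> 0"
    and c01: "\<forall>j\<in>Jg. supp (AH j) v0 < 0" and c02: "\<forall>j<m. supp (A1 j) v0 \<le> 0 \<and> supp (A2 j) v0 \<le> 0"
    and cV: "\<forall>i<m. supp (A1 i) (V i) < 0 \<and> (\<forall>k<m. k \<noteq> i \<longrightarrow> supp (A1 k) (V i) \<le> 0 \<and> supp (A2 k) (V i) \<le> 0)"
    and cW: "\<forall>i<m. supp (A2 i) (W i) < 0 \<and> (\<forall>k<m. k \<noteq> i \<longrightarrow> supp (A2 k) (W i) \<le> 0 \<and> supp (A1 k) (W i) \<le> 0)"
  shows "\<exists>Q. \<forall>\<eta>>0. \<exists>\<alpha> z. 0 < \<alpha> \<and> \<alpha> \<le> \<eta> \<and> norm (z - v) \<le> \<eta> * Q \<and> (\<forall>j<m. F j (x + \<alpha> *\<^sub>R z) = 0)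
      \<and> (\<forall>j\<in>Jg. H j (x + \<alpha> *\<^sub>R z) \<le> 0) \<and> Pn (x + \<alpha> *\<^sub>R z)"
proof -
  obtain c1 where c1: "c1 > 0" "\<forall>i\<in>{..<m}. c1 \<le> - supp (A1 i) (V i)"
    using fin_pos_lower[of "{..<m}" "\<lambda>i. - supp (A1 i) (V i)"] cV by auto
  obtain c2 where c2: "c2 > 0" "\<forall>i\<in>{..<m}. c2 \<le> - supp (A2 i) (W i)"
    using fin_pos_lower[of "{..<m}" "\<lambda>i. - supp (A2 i) (W i)"] cW by auto
  obtain c3 where c3: "c3 > 0" "\<forall>j\<in>Jg. c3 \<le> - supp (AH j) v0"
    using fin_pos_lower[of Jg "\<lambda>j. - supp (AH j) v0"] c01 fin by auto
  define c where "c = min 1 (min c1 (min c2 c3))"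
  have c: "0 < c" "c \<le> 1" "\<forall>i<m. supp (A1 i) (V i) \<le> - c" "\<forall>i<m. supp (A2 i) (W i) \<le> - c"
    "\<forall>j\<in>Jg. supp (AH j) v0 \<le> - c"
  proof -
    have cc: "0 < c" "c \<le> 1" "c \<le> c1" "c \<le> c2" "c \<le> c3" using c1 c2 c3 by (auto simp: c_def)
    show "0 < c" "c \<le> 1" using cc by auto
    show "\<forall>i<m. supp (A1 i) (V i) \<le> - c" using cc c1 by force
    show "\<forall>i<m. supp (A2 i) (W i) \<le> - c" using cc c2 by force
    show "\<forall>j\<in>Jg. supp (AH j) v0 \<le> - c" using cc c3 by force
  qed
  define hF where "hF p = (case p of (k, j) \<Rightarrow>
      \<bar>supp (A1 k) (V j)\<bar> + \<bar>supp (A1 k) (- V j)\<bar> + \<bar>supp (A1 k) (W j)\<bar> + \<bar>supp (A1 k) (- W j)\<bar>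
    + \<bar>supp (A2 k) (V j)\<bar> + \<bar>supp (A2 k) (- V j)\<bar> + \<bar>supp (A2 k) (W j)\<bar> + \<bar>supp (A2 k) (- W j)\<bar>)" for p
  define hH where "hH p = (case p of (k, j) \<Rightarrow>
      \<bar>supp (AH k) (V j)\<bar> + \<bar>supp (AH k) (W j)\<bar>)" for p
  obtain B1 where B1: "B1 \<ge> 0" "\<forall>p\<in>{..<m} \<times> {..<m}. hF p \<le> B1"
    using fin_upper[of "{..<m} \<times> {..<m}" hF] by auto
  obtain B2 where B2: "B2 \<ge> 0" "\<forall>p\<in>Jg \<times> {..<m}. hH p \<le> B2"
    using fin_upper[of "Jg \<times> {..<m}" hH] fin by auto
  define Sb where "Sb = max B1 B2"
  have Sb0: "0 \<le> Sb" using B1 by (simp add: Sb_def)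
  have SbF: "max (supp (A1 k) (V j)) (supp (A1 k) (- V j)) \<le> Sb \<and> max (supp (A1 k) (W j)) (supp (A1 k) (- W j)) \<le> Sb
     \<and> max (supp (A2 k) (V j)) (supp (A2 k) (- V j)) \<le> Sb \<and> max (supp (A2 k) (W j)) (supp (A2 k) (- W j)) \<le> Sb"
    if "k < m" "j < m" for k j
  proof -
    have "hF (k, j) \<le> B1" using B1 that by auto
    then have "hF (k, j) \<le> Sb" by (simp add: Sb_def)
    then show ?thesis unfolding hF_def by (intro abs8) simp
  qed
  have SbH: "supp (AH k) (V j) \<le> Sb \<and> supp (AH k) (W j) \<le> Sb" if "k \<in> Jg" "j < m" for k j
  proof -
    have "hH (k, j) \<le> B2" using B2 that by auto
    then have "hH (k, j) \<le> Sb" by (simp add: Sb_def)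
    then have "\<bar>supp (AH k) (V j)\<bar> + \<bar>supp (AH k) (W j)\<bar> \<le> Sb" unfolding hH_def by simp
    then show ?thesis
      using sum8_gen[of "\<bar>supp (AH k) (V j)\<bar>" "\<bar>supp (AH k) (W j)\<bar>" 0 0 0 0 0 0 Sb "supp (AH k) (V j)" "supp (AH k) (W j)" 0 0 0 0 0 0]
      by simp
  qed
  define Nv where "Nv = (\<Sum>j<m. norm (V j) + norm (W j))"
  have Nv0: "0 \<le> Nv" unfolding Nv_def by (intro sum_nonneg) auto
  define X0 where "X0 = span (V ` {..<m} \<union> W ` {..<m})"
  have fdX0: "finite_dim_subspace X0"
    unfolding finite_dim_subspace_def X0_def by (auto intro: exI[of _ "V ` {..<m} \<union> W ` {..<m}"])
  obtain R0 where R0: "R0 > 0" "\<forall>j<m. continuous_on (ball x R0) (F j)" "\<forall>y. dist y x < R0 \<longrightarrow> Pn y"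
  proof -
    have "\<forall>j\<in>{..<m}. \<exists>r>0. continuous_on (ball x r) (F j)"
    proof
      fix j assume "j \<in> {..<m}"
      then obtain U where U: "open U" "x \<in> U" "continuous_on U (F j)" using Fc by auto
      then obtain r where "r > 0" "ball x r \<subseteq> U" using open_contains_ball by blast
      then show "\<exists>r>0. continuous_on (ball x r) (F j)" using U continuous_on_subset by blast
    qed
    then obtain r1 where r1: "r1 > 0" "\<forall>j\<in>{..<m}. continuous_on (ball x r1) (F j)"
      using fin_delta[of "{..<m}" "\<lambda>j r. continuous_on (ball x r) (F j)"]
      by (metis (no_types, lifting) finite_lessThan continuous_on_subset subset_ball)
    obtain r2 where r2: "r2 > 0" "\<forall>y. dist y x < r2 \<longrightarrow> Pn y" using Pn by auto
    show ?thesis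
      by (rule that[of "min r1 r2"]) (use r1 r2 in \<open>auto intro: continuous_on_subset\<close>)
  qed
  show ?thesis
  proof (rule exI[of _ "norm v0 + Nv"], intro allI impI)
    fix \<eta> :: real assume \<eta>: "0 < \<eta>"
    define \<epsilon> where "\<epsilon> = \<eta> * c / (4 * (real m * Sb + 1))"
    have "0 \<le> real m * Sb" using Sb0 by simp
    then have den: "0 < 4 * (real m * Sb + 1)" by (smt (verit))
    have \<epsilon>0: "0 < \<epsilon>" unfolding \<epsilon>_def using \<eta> c den by simp
    have \<epsilon>\<eta>: "\<epsilon> \<le> \<eta>"
    proof -
      have "\<eta> * c \<le> \<eta> * 1" using c \<eta> by (intro mult_left_mono) auto
      also have "\<dots> \<le> \<eta> * (4 * (real m * Sb + 1))" using \<eta> Sb0 by (intro mult_left_mono) auto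
      finally show ?thesis unfolding \<epsilon>_def using den by (simp add: divide_le_eq)
    qed
    have \<epsilon>m: "\<epsilon> * (2 * real m * Sb) \<le> \<eta> * c / 2"
    proof -
      have "\<epsilon> * (2 * real m * Sb) = (\<eta> * c / 2) * ((real m * Sb) / (real m * Sb + 1))"
        unfolding \<epsilon>_def using den by (simp add: field_simps)
      also have "\<dots> \<le> (\<eta> * c / 2) * 1"
        using \<eta> c \<open>0 \<le> real m * Sb\<close> by (intro mult_left_mono) (auto simp: divide_le_eq_1)
      finally show ?thesis by simp
    qed
    define \<rho> where "\<rho> = c / (8 * (Sb + 1))"
    have \<rho>0: "0 < \<rho>" unfolding \<rho>_def using c Sb0 by (simp add: add_pos_nonneg)
    have \<rho>S: "4 * \<rho> * Sb \<le> c / 2"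
    proof -
      have "4 * \<rho> * Sb = (c / 2) * (Sb / (Sb + 1))" unfolding \<rho>_def using Sb0 by (simp add: field_simps)
      also have "\<dots> \<le> (c / 2) * 1" using c Sb0 by (intro mult_left_mono) (auto simp: divide_le_eq_1)
      finally show ?thesis by simp
    qed
    define e where "e = \<epsilon> * c / 4"
    have e0: "0 < e" unfolding e_def using \<epsilon>0 c by simp
    define \<Phi> where "\<Phi> = phi m v v0 V W \<eta> \<epsilon>"
    define C where "C = cube m"
    have E1: "supp (A1 i) (\<Phi> t) \<le> \<epsilon> * (ap (t i) * supp (A1 i) (V i) + bp (t i) * supp (A1 i) (W i))"
      if t: "t \<in> C" and i: "i < m" for t i
    proof -
      have "supp (A1 i) (\<Phi> t) \<le> supp (A1 i) v + \<eta> * supp (A1 i) v0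
          + \<epsilon> * (\<Sum>j<m. ap (t j) * supp (A1 i) (V j) + bp (t j) * supp (A1 i) (W j))"
        unfolding \<Phi>_def phi_def using g1 i \<eta> \<epsilon>0 ap_bp(1,2) by (intro supp_est) auto
      moreover have "(\<Sum>j<m. ap (t j) * supp (A1 i) (V j) + bp (t j) * supp (A1 i) (W j))
          \<le> ap (t i) * supp (A1 i) (V i) + bp (t i) * supp (A1 i) (W i)"
        by (rule sum_le_single[OF i]) (use cV cW ap_bp(1,2) i in \<open>auto intro!: add_nonpos_nonpos mult_nonneg_nonpos\<close>)
      moreover have "\<eta> * supp (A1 i) v0 \<le> 0" using c02 i \<eta> by (simp add: mult_nonneg_nonpos)
      ultimately show ?thesis using cv1 i \<epsilon>0 mult_left_mono[of _ _ \<epsilon>] by (smt (verit))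
    qed
    have E2: "supp (A2 i) (\<Phi> t) \<le> \<epsilon> * (ap (t i) * supp (A2 i) (V i) + bp (t i) * supp (A2 i) (W i))"
      if t: "t \<in> C" and i: "i < m" for t i
    proof -
      have "supp (A2 i) (\<Phi> t) \<le> supp (A2 i) v + \<eta> * supp (A2 i) v0
          + \<epsilon> * (\<Sum>j<m. ap (t j) * supp (A2 i) (V j) + bp (t j) * supp (A2 i) (W j))"
        unfolding \<Phi>_def phi_def using g1 i \<eta> \<epsilon>0 ap_bp(1,2) by (intro supp_est) auto
      moreover have "(\<Sum>j<m. ap (t j) * supp (A2 i) (V j) + bp (t j) * supp (A2 i) (W j))
          \<le> ap (t i) * supp (A2 i) (V i) + bp (t i) * supp (A2 i) (W i)"
        by (rule sum_le_single[OF i]) (use cV cW ap_bp(1,2) i in \<open>auto intro!: add_nonpos_nonpos mult_nonneg_nonpos\<close>)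
      moreover have "\<eta> * supp (A2 i) v0 \<le> 0" using c02 i \<eta> by (simp add: mult_nonneg_nonpos)
      ultimately show ?thesis using cv1 i \<epsilon>0 mult_left_mono[of _ _ \<epsilon>] by (smt (verit))
    qed
    have E3: "supp (AH j) (\<Phi> t) \<le> - (\<eta> * c / 2)" if t: "t \<in> C" and j: "j \<in> Jg" for t j
    proof -
      have "supp (AH j) (\<Phi> t) \<le> supp (AH j) v + \<eta> * supp (AH j) v0
          + \<epsilon> * (\<Sum>k<m. ap (t k) * supp (AH j) (V k) + bp (t k) * supp (AH j) (W k))"
        unfolding \<Phi>_def phi_def using g2 j \<eta> \<epsilon>0 ap_bp(1,2) by (intro supp_est) auto
      moreover have "(\<Sum>k<m. ap (t k) * supp (AH j) (V k) + bp (t k) * supp (AH j) (W k)) \<le> (\<Sum>k<m. 2 * Sb)"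
      proof (rule sum_mono)
        fix k assume k: "k \<in> {..<m}"
        have tk: "0 \<le> t k" "t k \<le> 1" using cube_mem[OF t[unfolded C_def]] k by auto
        have "ap (t k) * supp (AH j) (V k) \<le> Sb"
        proof (cases "supp (AH j) (V k) \<le> 0")
          case True then show ?thesis using ap_bp(1) Sb0 by (smt (verit) mult_nonneg_nonpos)
        next
          case False
          then have "ap (t k) * supp (AH j) (V k) \<le> 1 * supp (AH j) (V k)"
            using ap_bp(3)[OF tk(2)] by (intro mult_right_mono) auto
          moreover have "supp (AH j) (V k) \<le> Sb" using SbH[OF j, of k] k by simp
          ultimately show ?thesis by linarith
        qed
        moreover have "bp (t k) * supp (AH j) (W k) \<le> Sb"
        proof (cases "supp (AH j) (W k) \<le> 0")
          case True then show ?thesis using ap_bp(2) Sb0 by (smt (verit) mult_nonneg_nonpos)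
        next
          case False
          then have "bp (t k) * supp (AH j) (W k) \<le> 1 * supp (AH j) (W k)"
            using ap_bp(4)[OF tk(1)] by (intro mult_right_mono) auto
          moreover have "supp (AH j) (W k) \<le> Sb" using SbH[OF j, of k] k by simp
          ultimately show ?thesis by linarith
        qed
        ultimately show "ap (t k) * supp (AH j) (V k) + bp (t k) * supp (AH j) (W k) \<le> 2 * Sb" by simp
      qed
      moreover have "(\<Sum>k<m. 2 * Sb) = 2 * real m * Sb" by simp
      moreover have "\<eta> * supp (AH j) v0 \<le> \<eta> * (- c)" using c(5) j \<eta> by (intro mult_left_mono) auto
      ultimately have "supp (AH j) (\<Phi> t) \<le> 0 + \<eta> * (- c) + \<epsilon> * (2 * real m * Sb)"
        using cv2 j \<epsilon>0 mult_left_mono[of _ _ \<epsilon>] by (smt (verit))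
      then show ?thesis using \<epsilon>m by simp
    qed
    have E4: "supp (A1 i) (\<Phi> t' - \<Phi> t) \<le> \<epsilon> * c / 2 \<and> supp (A2 i) (\<Phi> t' - \<Phi> t) \<le> \<epsilon> * c / 2"
      if "t \<in> C" "t' \<in> C" "i < m" "(\<Sum>j<m. \<bar>t j - t' j\<bar>) < \<rho>" for t t' i
    proof -
      have sumd: "(\<Sum>j<m. \<bar>ap (t' j) - ap (t j)\<bar> + \<bar>bp (t' j) - bp (t j)\<bar>) \<le> 4 * \<rho>"
      proof -
        have "(\<Sum>j<m. \<bar>ap (t' j) - ap (t j)\<bar> + \<bar>bp (t' j) - bp (t j)\<bar>) \<le> (\<Sum>j<m. 4 * \<bar>t j - t' j\<bar>)"
        proof (rule sum_mono)
          fix j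
          show "\<bar>ap (t' j) - ap (t j)\<bar> + \<bar>bp (t' j) - bp (t j)\<bar> \<le> 4 * \<bar>t j - t' j\<bar>"
            using ap_bp(9)[of "t' j" "t j"] ap_bp(10)[of "t' j" "t j"] by (simp add: abs_minus_commute)
        qed
        also have "\<dots> = 4 * (\<Sum>j<m. \<bar>t j - t' j\<bar>)" by (simp add: sum_distrib_left)
        finally show ?thesis using that(4) by simp
      qed
      have bd: "\<epsilon> * (Sb * (\<Sum>j<m. \<bar>ap (t' j) - ap (t j)\<bar> + \<bar>bp (t' j) - bp (t j)\<bar>)) \<le> \<epsilon> * c / 2"
      proof -
        have "Sb * (\<Sum>j<m. \<bar>ap (t' j) - ap (t j)\<bar> + \<bar>bp (t' j) - bp (t j)\<bar>) \<le> Sb * (4 * \<rho>)"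
          using sumd Sb0 by (intro mult_left_mono) auto
        also have "\<dots> \<le> c / 2" using \<rho>S by (simp add: algebra_simps)
        finally show ?thesis using \<epsilon>0 mult_left_mono[of _ "c/2" \<epsilon>] by simp
      qed
      have eqd: "\<Phi> t' - \<Phi> t = \<epsilon> *\<^sub>R (\<Sum>j<m. (ap (t' j) - ap (t j)) *\<^sub>R V j + (bp (t' j) - bp (t j)) *\<^sub>R W j)"
        unfolding \<Phi>_def by (rule phi_diff)
      have "supp (A1 i) (\<Phi> t' - \<Phi> t) \<le> \<epsilon> * (Sb * (\<Sum>j<m. \<bar>ap (t' j) - ap (t j)\<bar> + \<bar>bp (t' j) - bp (t j)\<bar>))"
        unfolding eqd using g1 that(3) \<epsilon>0 SbF[OF that(3)] by (intro supp_est2) auto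
      moreover have "supp (A2 i) (\<Phi> t' - \<Phi> t) \<le> \<epsilon> * (Sb * (\<Sum>j<m. \<bar>ap (t' j) - ap (t j)\<bar> + \<bar>bp (t' j) - bp (t j)\<bar>))"
        unfolding eqd using g1 that(3) \<epsilon>0 SbF[OF that(3)] by (intro supp_est2) auto
      ultimately show ?thesis using bd by linarith
    qed
    have \<Phi>c: "continuous_on UNIV \<Phi>" unfolding \<Phi>_def by (rule phi_cont)
    have Cc: "compact C" unfolding C_def by (rule cube_compact)
    define Good where "Good t' \<delta> \<longleftrightarrow>
       (\<forall>j\<in>{..<m}. \<forall>\<alpha> v'. 0 < \<alpha> \<and> \<alpha> < \<delta> \<and> v' - \<Phi> t' \<in> X0 \<and> norm (v' - \<Phi> t') < \<delta> \<longrightarrow>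
            \<bar>(F j (x + \<alpha> *\<^sub>R v') - F j x) / \<alpha> - dir_deriv (F j) x (\<Phi> t')\<bar> < e)
     \<and> (\<forall>j\<in>Jg. \<forall>\<alpha> v'. 0 < \<alpha> \<and> \<alpha> < \<delta> \<and> v' - \<Phi> t' \<in> X0 \<and> norm (v' - \<Phi> t') < \<delta> \<longrightarrow>
            \<bar>(H j (x + \<alpha> *\<^sub>R v') - H j x) / \<alpha> - dir_deriv (H j) x (\<Phi> t')\<bar> < e)" for t' \<delta>
    have base: "\<exists>\<delta>>0. Good t' \<delta>" for t'
    proof -
      have "\<exists>\<delta>>0. \<forall>j\<in>{..<m}. \<forall>\<alpha> v'. 0 < \<alpha> \<and> \<alpha> < \<delta> \<and> v' - \<Phi> t' \<in> X0 \<and> norm (v' - \<Phi> t') < \<delta> \<longrightarrow>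
            \<bar>(F j (x + \<alpha> *\<^sub>R v') - F j x) / \<alpha> - dir_deriv (F j) x (\<Phi> t')\<bar> < e"
      proof (rule fin_delta)
        show "\<forall>j\<in>{..<m}. \<exists>\<delta>>0. \<forall>\<alpha> v'. 0 < \<alpha> \<and> \<alpha> < \<delta> \<and> v' - \<Phi> t' \<in> X0 \<and> norm (v' - \<Phi> t') < \<delta> \<longrightarrow>
            \<bar>(F j (x + \<alpha> *\<^sub>R v') - F j x) / \<alpha> - dir_deriv (F j) x (\<Phi> t')\<bar> < e"
          using uF fdX0 e0 unfolding dir_diff_unif_def by blast
      qed auto
      then obtain d1 where d1: "d1 > 0" "\<forall>j\<in>{..<m}. \<forall>\<alpha> v'. 0 < \<alpha> \<and> \<alpha> < d1 \<and> v' - \<Phi> t' \<in> X0 \<and> norm (v' - \<Phi> t') < d1 \<longrightarrow>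
            \<bar>(F j (x + \<alpha> *\<^sub>R v') - F j x) / \<alpha> - dir_deriv (F j) x (\<Phi> t')\<bar> < e" by blast
      have "\<exists>\<delta>>0. \<forall>j\<in>Jg. \<forall>\<alpha> v'. 0 < \<alpha> \<and> \<alpha> < \<delta> \<and> v' - \<Phi> t' \<in> X0 \<and> norm (v' - \<Phi> t') < \<delta> \<longrightarrow>
            \<bar>(H j (x + \<alpha> *\<^sub>R v') - H j x) / \<alpha> - dir_deriv (H j) x (\<Phi> t')\<bar> < e"
      proof (rule fin_delta)
        show "\<forall>j\<in>Jg. \<exists>\<delta>>0. \<forall>\<alpha> v'. 0 < \<alpha> \<and> \<alpha> < \<delta> \<and> v' - \<Phi> t' \<in> X0 \<and> norm (v' - \<Phi> t') < \<delta> \<longrightarrow>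
            \<bar>(H j (x + \<alpha> *\<^sub>R v') - H j x) / \<alpha> - dir_deriv (H j) x (\<Phi> t')\<bar> < e"
          using uH fdX0 e0 unfolding dir_diff_unif_def by blast
      qed (use fin in auto)
      then obtain d2 where d2: "d2 > 0" "\<forall>j\<in>Jg. \<forall>\<alpha> v'. 0 < \<alpha> \<and> \<alpha> < d2 \<and> v' - \<Phi> t' \<in> X0 \<and> norm (v' - \<Phi> t') < d2 \<longrightarrow>
            \<bar>(H j (x + \<alpha> *\<^sub>R v') - H j x) / \<alpha> - dir_deriv (H j) x (\<Phi> t')\<bar> < e" by blast
      show ?thesis
        by (rule exI[of _ "min d1 d2"]) (use d1 d2 in \<open>auto simp: Good_def\<close>)
    qed
    then obtain \<delta> where \<delta>: "\<And>t'. \<delta> t' > 0" "\<And>t'. Good t' (\<delta> t')" by metis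
    define Ob where "Ob t' = {t. norm (\<Phi> t - \<Phi> t') < \<delta> t'} \<inter> {t. (\<Sum>j<m. \<bar>t j - t' j\<bar>) < \<rho>}" for t'
    have Oopen: "open (Ob t')" for t'
    proof -
      have "open {t. norm (\<Phi> t - \<Phi> t') < \<delta> t'}"
        by (rule open_Collect_less) (intro continuous_intros \<Phi>c)+
      moreover have "open {t::nat\<Rightarrow>real. (\<Sum>j<m. \<bar>t j - t' j\<bar>) < \<rho>}"
        by (rule open_Collect_less) (intro continuous_intros continuous_on_product_coordinates)+
      ultimately show ?thesis unfolding Ob_def by (rule open_Int)
    qed
    have Ocov: "C \<subseteq> \<Union> (Ob ` C)"
    proof
      fix t assume "t \<in> C"
      moreover have "t \<in> Ob t" unfolding Ob_def using \<delta>(1)[of t] \<rho>0 by simp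
      ultimately show "t \<in> \<Union> (Ob ` C)" by blast
    qed
    obtain C' where C': "C' \<subseteq> C" "finite C'" "C \<subseteq> \<Union> (Ob ` C')"
      using compactE_image[OF Cc Oopen Ocov] by metis
    define \<delta>0 where "\<delta>0 = Min (insert 1 (\<delta> ` C'))"
    have \<delta>0: "0 < \<delta>0" unfolding \<delta>0_def using C'(2) \<delta>(1) by (subst Min_gr_iff) auto
    have \<delta>0le: "\<delta>0 \<le> \<delta> t'" if "t' \<in> C'" for t'
      unfolding \<delta>0_def using C'(2) that by (intro Min_le) auto
    define Rb where "Rb = norm v + \<eta> * norm v0 + \<epsilon> * Nv"
    have Rb: "norm (\<Phi> t) \<le> Rb" if "t \<in> C" for t
    proof -
      have "norm (\<Phi> t - v) \<le> \<eta> * norm v0 + \<epsilon> * Nv"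
        unfolding \<Phi>_def Nv_def using phi_norm[of t m \<eta> \<epsilon> v v0 V W] that \<eta> \<epsilon>0 by (simp add: C_def)
      then show ?thesis unfolding Rb_def using norm_triangle_sub[of "\<Phi> t" v] by linarith
    qed
    have Rb0: "0 \<le> Rb" using Rb[of "\<lambda>_. 0"] cube_ne[of m] by (simp add: C_def) (meson norm_ge_zero order_trans)
    define \<alpha> where "\<alpha> = min (\<delta>0 / 2) (min \<eta> (R0 / (2 * (Rb + 1))))"
    have \<alpha>0: "0 < \<alpha>" unfolding \<alpha>_def using \<delta>0 \<eta> R0(1) Rb0 by auto
    have \<alpha>\<delta>: "\<alpha> < \<delta>0" unfolding \<alpha>_def using \<delta>0 by auto
    have \<alpha>\<eta>: "\<alpha> \<le> \<eta>" unfolding \<alpha>_def by auto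
    have \<alpha>R: "\<alpha> * Rb < R0"
    proof -
      have "\<alpha> \<le> R0 / (2 * (Rb + 1))" unfolding \<alpha>_def by auto
      then have "\<alpha> * (2 * (Rb + 1)) \<le> R0" using Rb0 by (simp add: le_divide_eq)
      moreover have "\<alpha> * Rb < \<alpha> * (2 * (Rb + 1))" using \<alpha>0 Rb0 by (intro mult_strict_left_mono) auto
      ultimately show ?thesis by linarith
    qed
    have inball: "dist (x + \<alpha> *\<^sub>R \<Phi> t) x < R0" if "t \<in> C" for t
    proof -
      have "dist (x + \<alpha> *\<^sub>R \<Phi> t) x = \<alpha> * norm (\<Phi> t)" using \<alpha>0 by (simp add: dist_norm)
      also have "\<dots> \<le> \<alpha> * Rb" using Rb[OF that] \<alpha>0 by (intro mult_left_mono) auto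
      finally show ?thesis using \<alpha>R by linarith
    qed
    have approx: "\<exists>t'\<in>C. (\<Sum>j<m. \<bar>t j - t' j\<bar>) < \<rho>
        \<and> (\<forall>j<m. \<bar>F j (x + \<alpha> *\<^sub>R \<Phi> t) / \<alpha> - dir_deriv (F j) x (\<Phi> t')\<bar> < e)
        \<and> (\<forall>j\<in>Jg. \<bar>H j (x + \<alpha> *\<^sub>R \<Phi> t) / \<alpha> - dir_deriv (H j) x (\<Phi> t')\<bar> < e)" if t: "t \<in> C" for t
    proof -
      obtain t' where t': "t' \<in> C'" "t \<in> Ob t'" using C'(3) t by blast
      have sp: "\<Phi> t - \<Phi> t' \<in> X0" unfolding X0_def \<Phi>_def by (rule phi_span)
      have nb: "norm (\<Phi> t - \<Phi> t') < \<delta> t'" "(\<Sum>j<m. \<bar>t j - t' j\<bar>) < \<rho>" using t'(2) by (auto simp: Ob_def)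
      have a\<delta>: "\<alpha> < \<delta> t'" using \<alpha>\<delta> \<delta>0le[OF t'(1)] by linarith
      have G: "Good t' (\<delta> t')" by (rule \<delta>(2))
      show ?thesis
      proof (intro bexI[of _ t'] conjI allI impI ballI)
        show "t' \<in> C" using t' C'(1) by auto
        show "(\<Sum>j<m. \<bar>t j - t' j\<bar>) < \<rho>" by (rule nb(2))
        fix j assume j: "j < m"
        have "\<bar>(F j (x + \<alpha> *\<^sub>R \<Phi> t) - F j x) / \<alpha> - dir_deriv (F j) x (\<Phi> t')\<bar> < e"
          using G j \<alpha>0 a\<delta> sp nb(1) unfolding Good_def by blast
        then show "\<bar>F j (x + \<alpha> *\<^sub>R \<Phi> t) / \<alpha> - dir_deriv (F j) x (\<Phi> t')\<bar> < e" using F0 j by simp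
      next
        fix j assume j: "j \<in> Jg"
        have "\<bar>(H j (x + \<alpha> *\<^sub>R \<Phi> t) - H j x) / \<alpha> - dir_deriv (H j) x (\<Phi> t')\<bar> < e"
          using G j \<alpha>0 a\<delta> sp nb(1) unfolding Good_def by blast
        then show "\<bar>H j (x + \<alpha> *\<^sub>R \<Phi> t) / \<alpha> - dir_deriv (H j) x (\<Phi> t')\<bar> < e" using H0 j by simp
      qed
    qed
    have splitd: "supp A (\<Phi> t') \<le> supp A (\<Phi> t) + supp A (\<Phi> t' - \<Phi> t)" if "goodset A" for A t t'
      using supp_add[OF that, of "\<Phi> t" "\<Phi> t' - \<Phi> t"] by simp
    have face1: "F i (x + \<alpha> *\<^sub>R \<Phi> t) < 0" if t: "t \<in> C" and i: "i < m" and ti: "t i = 1" for t i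
    proof -
      obtain t' where t': "t' \<in> C" "(\<Sum>j<m. \<bar>t j - t' j\<bar>) < \<rho>"
        "\<bar>F i (x + \<alpha> *\<^sub>R \<Phi> t) / \<alpha> - dir_deriv (F i) x (\<Phi> t')\<bar> < e"
        using approx[OF t] i by blast
      have "supp (A1 i) (\<Phi> t) \<le> \<epsilon> * supp (A1 i) (V i)" using E1[OF t i] ti ap_bp(5,6) by simp
      also have "\<dots> \<le> \<epsilon> * (- c)" using c(3) i \<epsilon>0 by (intro mult_left_mono) auto
      finally have s: "supp (A1 i) (\<Phi> t) \<le> - (\<epsilon> * c)" by simp
      have "supp (A1 i) (\<Phi> t') \<le> - (\<epsilon> * c) + \<epsilon> * c / 2"
        using splitd[of "A1 i" t' t] g1 i s E4[OF t t'(1) i t'(2)] by force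
      moreover have "dir_deriv (F i) x (\<Phi> t') \<le> supp (A1 i) (\<Phi> t')" using dF i by blast
      ultimately have "F i (x + \<alpha> *\<^sub>R \<Phi> t) / \<alpha> < 0" using t'(3) unfolding e_def by linarith
      then show ?thesis using \<alpha>0 by (simp add: divide_less_0_iff)
    qed
    have face0: "0 < F i (x + \<alpha> *\<^sub>R \<Phi> t)" if t: "t \<in> C" and i: "i < m" and ti: "t i = 0" for t i
    proof -
      obtain t' where t': "t' \<in> C" "(\<Sum>j<m. \<bar>t j - t' j\<bar>) < \<rho>"
        "\<bar>F i (x + \<alpha> *\<^sub>R \<Phi> t) / \<alpha> - dir_deriv (F i) x (\<Phi> t')\<bar> < e"
        using approx[OF t] i by blast
      have "supp (A2 i) (\<Phi> t) \<le> \<epsilon> * supp (A2 i) (W i)" using E2[OF t i] ti ap_bp(7,8) by simp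
      also have "\<dots> \<le> \<epsilon> * (- c)" using c(4) i \<epsilon>0 by (intro mult_left_mono) auto
      finally have s: "supp (A2 i) (\<Phi> t) \<le> - (\<epsilon> * c)" by simp
      have "supp (A2 i) (\<Phi> t') \<le> - (\<epsilon> * c) + \<epsilon> * c / 2"
        using splitd[of "A2 i" t' t] g1 i s E4[OF t t'(1) i t'(2)] by force
      moreover have "- dir_deriv (F i) x (\<Phi> t') \<le> supp (A2 i) (\<Phi> t')" using dF i by blast
      ultimately have "0 < F i (x + \<alpha> *\<^sub>R \<Phi> t) / \<alpha>" using t'(3) unfolding e_def by linarith
      then show ?thesis using \<alpha>0 by (simp add: zero_less_divide_iff)
    qed
    have hneg: "H j (x + \<alpha> *\<^sub>R \<Phi> t) < 0" if t: "t \<in> C" and j: "j \<in> Jg" for t j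
    proof -
      obtain t' where t': "t' \<in> C" "\<bar>H j (x + \<alpha> *\<^sub>R \<Phi> t) / \<alpha> - dir_deriv (H j) x (\<Phi> t')\<bar> < e"
        using approx[OF t] j by blast
      have "dir_deriv (H j) x (\<Phi> t') \<le> supp (AH j) (\<Phi> t')" using dH j by blast
      then have "dir_deriv (H j) x (\<Phi> t') \<le> - (\<eta> * c / 2)" using E3[OF t'(1) j] by linarith
      moreover have "e \<le> \<eta> * c / 4" unfolding e_def using \<epsilon>\<eta> c by (simp add: mult_right_mono)
      moreover have "0 < \<eta> * c" using \<eta> c by simp
      ultimately have "H j (x + \<alpha> *\<^sub>R \<Phi> t) / \<alpha> < 0" using t'(2) by linarith
      then show ?thesis using \<alpha>0 by (simp add: divide_less_0_iff)
    qed
    define K where "K = \<Phi> ` C"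
    have Kc: "compact K" unfolding K_def
      by (rule compact_continuous_image[OF continuous_on_subset[OF \<Phi>c] Cc]) simp
    have KB: "(\<lambda>z. x + \<alpha> *\<^sub>R z) ` K \<subseteq> ball x R0"
      using inball by (auto simp: K_def dist_commute)
    have Gc: "\<forall>i<m. continuous_on K (\<lambda>z. F i (x + \<alpha> *\<^sub>R z))"
    proof (intro allI impI)
      fix i assume "i < m"
      then have "continuous_on (ball x R0) (F i)" using R0(2) by auto
      then show "continuous_on K (\<lambda>z. F i (x + \<alpha> *\<^sub>R z))"
        by (rule continuous_on_compose2[OF _ _ KB]) (intro continuous_intros)
    qed
    have "\<exists>z\<in>K. \<forall>i<m. F i (x + \<alpha> *\<^sub>R z) = 0"
    proof (rule miranda[of C m K \<Phi> "2 * \<epsilon> * Nv" "\<lambda>i z. F i (x + \<alpha> *\<^sub>R z)"])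
      show "C = {t. \<forall>j. t j \<in> (if j < m then {0..1} else {0})}" by (simp add: C_def cube_def)
      show "compact K" by (rule Kc)
      show "\<Phi> ` C \<subseteq> K" by (simp add: K_def)
      show "0 \<le> 2 * \<epsilon> * Nv" using \<epsilon>0 Nv0 by simp
      show "\<forall>t\<in>C. \<forall>t'\<in>C. dist (\<Phi> t) (\<Phi> t') \<le> 2 * \<epsilon> * Nv * (\<Sum>j<m. \<bar>t j - t' j\<bar>)"
        unfolding \<Phi>_def Nv_def dist_norm using phi_lip[of \<epsilon>] \<epsilon>0 by (auto simp del: phi_def)
      show "\<forall>i<m. continuous_on K (\<lambda>z. F i (x + \<alpha> *\<^sub>R z))" by (rule Gc)
      show "\<forall>i<m. \<forall>t\<in>C. t i = 0 \<longrightarrow> 0 \<le> F i (x + \<alpha> *\<^sub>R \<Phi> t)" using face0 by (auto intro: less_imp_le)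
      show "\<forall>i<m. \<forall>t\<in>C. t i = 1 \<longrightarrow> F i (x + \<alpha> *\<^sub>R \<Phi> t) \<le> 0" using face1 by (auto intro: less_imp_le)
    qed
    then obtain t where t: "t \<in> C" and zF: "\<forall>i<m. F i (x + \<alpha> *\<^sub>R \<Phi> t) = 0" by (auto simp: K_def)
    show "\<exists>\<alpha> z. 0 < \<alpha> \<and> \<alpha> \<le> \<eta> \<and> norm (z - v) \<le> \<eta> * (norm v0 + Nv) \<and> (\<forall>j<m. F j (x + \<alpha> *\<^sub>R z) = 0)
      \<and> (\<forall>j\<in>Jg. H j (x + \<alpha> *\<^sub>R z) \<le> 0) \<and> Pn (x + \<alpha> *\<^sub>R z)"
    proof (intro exI[of _ \<alpha>] exI[of _ "\<Phi> t"] conjI)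
      show "0 < \<alpha>" "\<alpha> \<le> \<eta>" by (fact \<alpha>0) (fact \<alpha>\<eta>)
      have "norm (\<Phi> t - v) \<le> \<eta> * norm v0 + \<epsilon> * Nv"
        unfolding \<Phi>_def Nv_def using phi_norm[of t m \<eta> \<epsilon> v v0 V W] t \<eta> \<epsilon>0 by (simp add: C_def)
      also have "\<dots> \<le> \<eta> * norm v0 + \<eta> * Nv" using \<epsilon>\<eta> Nv0 by (simp add: mult_right_mono)
      finally show "norm (\<Phi> t - v) \<le> \<eta> * (norm v0 + Nv)" by (simp add: algebra_simps)
      show "\<forall>j<m. F j (x + \<alpha> *\<^sub>R \<Phi> t) = 0" by (rule zF)
      show "\<forall>j\<in>Jg. H j (x + \<alpha> *\<^sub>R \<Phi> t) \<le> 0" using hneg[OF t] by (auto intro: less_imp_le)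
      show "Pn (x + \<alpha> *\<^sub>R \<Phi> t)" using R0(3) inball[OF t] by blast
    qed
  qed
qed


theorem theorem1:
  fixes f g :: "nat \<Rightarrow> 'a::banach \<Rightarrow> real"
    and m l :: nat
    and M :: "'a set" and xbar :: 'a
    and Dlf Duf Dlg Dug :: "nat \<Rightarrow> ('a \<Rightarrow> real) set"
    and xs ys zs :: "nat \<Rightarrow> ('a \<Rightarrow> real)"
    and Jx :: "nat set"
  assumes M_def: "M = {x. (\<forall>i\<in>{1..m}. f i x = 0) \<and> (\<forall>j\<in>{1..l}. g j x \<le> 0)}"
    and xbar_M: "xbar \<in> M"
    and Jx_def: "Jx = {j\<in>{1..l}. g j xbar = 0}"
    and f_cont: "\<forall>i\<in>{1..m}. \<exists>U. open U \<and> xbar \<in> U \<and> continuous_on U (f i)"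
    and g_usc: "\<forall>j\<in>{1..l} - Jx. usc_at (g j) xbar"
    and f_qd: "\<forall>i\<in>{1..m}. quasidiff_unif (f i) xbar (Dlf i) (Duf i)"
    and g_qd: "\<forall>j\<in>Jx. quasidiff_unif (g j) xbar (Dlg j) (Dug j)"
    and xs_in: "\<forall>i\<in>{1..m}. xs i \<in> Dlf i"
    and ys_in: "\<forall>i\<in>{1..m}. ys i \<in> Duf i"
    and zs_in: "\<forall>j\<in>Jx. zs j \<in> Dug j"
    and CQ1: "\<forall>i\<in>{1..m}. \<exists>v. supp (mink_plus (Dlf i) {ys i}) v < 0 \<and>
               (\<forall>k\<in>{1..m}. k \<noteq> i \<longrightarrow> supp (mink_plus (Dlf k) {ys k}) v \<le> 0 \<and>
                   supp (mink_plus {\<lambda>u. - xs k u} (fun_uminus_set (Duf k))) v \<le> 0)"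
    and CQ2: "\<forall>i\<in>{1..m}. \<exists>w. supp (mink_plus {\<lambda>u. - xs i u} (fun_uminus_set (Duf i))) w < 0 \<and>
               (\<forall>k\<in>{1..m}. k \<noteq> i \<longrightarrow> supp (mink_plus {\<lambda>u. - xs k u} (fun_uminus_set (Duf k))) w \<le> 0 \<and>
                   supp (mink_plus (Dlf k) {ys k}) w \<le> 0)"
    and CQ3: "\<exists>v0. (\<forall>j\<in>Jx. supp (mink_plus (Dlg j) {zs j}) v0 < 0) \<and>
               (\<forall>i\<in>{1..m}. supp (mink_plus (Dlf i) {ys i}) v0 \<le> 0 \<and>
                   supp (mink_plus {\<lambda>u. - xs i u} (fun_uminus_set (Duf i))) v0 \<le> 0)"
  shows "{v. (\<forall>i\<in>{1..m}. supp (mink_plus (Dlf i) {ys i}) v \<le> 0 \<and>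
               supp (mink_plus {\<lambda>u. - xs i u} (fun_uminus_set (Duf i))) v \<le> 0) \<and>
             (\<forall>j\<in>Jx. supp (mink_plus (Dlg j) {zs j}) v \<le> 0)}
         \<subseteq> contingent_cone M xbar"
proof
  fix v assume "v \<in> {v. (\<forall>i\<in>{1..m}. supp (mink_plus (Dlf i) {ys i}) v \<le> 0 \<and>
               supp (mink_plus {\<lambda>u. - xs i u} (fun_uminus_set (Duf i))) v \<le> 0) \<and>
             (\<forall>j\<in>Jx. supp (mink_plus (Dlg j) {zs j}) v \<le> 0)}"
  then have v1: "\<forall>i\<in>{1..m}. supp (mink_plus (Dlf i) {ys i}) v \<le> 0 \<and>
               supp (mink_plus {\<lambda>u. - xs i u} (fun_uminus_set (Duf i))) v \<le> 0"
    and v2: "\<forall>j\<in>Jx. supp (mink_plus (Dlg j) {zs j}) v \<le> 0" by auto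
  define A1 where "A1 j = mink_plus (Dlf (Suc j)) {ys (Suc j)}" for j
  define A2 where "A2 j = mink_plus {\<lambda>u. - xs (Suc j) u} (fun_uminus_set (Duf (Suc j)))" for j
  define AH where "AH j = mink_plus (Dlg j) {zs j}" for j
  define Pn where "Pn y = (\<forall>j\<in>{1..l} - Jx. g j y \<le> 0)" for y
  obtain Vv where Vv: "\<forall>i\<in>{1..m}. supp (mink_plus (Dlf i) {ys i}) (Vv i) < 0 \<and>
               (\<forall>k\<in>{1..m}. k \<noteq> i \<longrightarrow> supp (mink_plus (Dlf k) {ys k}) (Vv i) \<le> 0 \<and>
                   supp (mink_plus {\<lambda>u. - xs k u} (fun_uminus_set (Duf k))) (Vv i) \<le> 0)"
    using bchoice[OF CQ1] by blast
  obtain Ww where Ww: "\<forall>i\<in>{1..m}. supp (mink_plus {\<lambda>u. - xs i u} (fun_uminus_set (Duf i))) (Ww i) < 0 \<and>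
               (\<forall>k\<in>{1..m}. k \<noteq> i \<longrightarrow> supp (mink_plus {\<lambda>u. - xs k u} (fun_uminus_set (Duf k))) (Ww i) \<le> 0 \<and>
                   supp (mink_plus (Dlf k) {ys k}) (Ww i) \<le> 0)"
    using bchoice[OF CQ2] by blast
  obtain v0 where v0: "\<forall>j\<in>Jx. supp (mink_plus (Dlg j) {zs j}) v0 < 0"
    "\<forall>i\<in>{1..m}. supp (mink_plus (Dlf i) {ys i}) v0 \<le> 0 \<and>
                   supp (mink_plus {\<lambda>u. - xs i u} (fun_uminus_set (Duf i))) v0 \<le> 0"
    using CQ3 by blast
  have Suc_in: "Suc j \<in> {1..m}" if "j < m" for j using that by auto
  have qdf: "quasidiff (f i) xbar (Dlf i) (Duf i)" "dir_diff_unif (f i) xbar" if "i \<in> {1..m}" for i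
    using f_qd that by (auto simp: quasidiff_unif_def)
  have qdg: "quasidiff (g j) xbar (Dlg j) (Dug j)" "dir_diff_unif (g j) xbar" if "j \<in> Jx" for j
    using g_qd that by (auto simp: quasidiff_unif_def)
  have finJ: "finite Jx" unfolding Jx_def by simp
  have "\<exists>Q. \<forall>\<eta>>0. \<exists>\<alpha> z. 0 < \<alpha> \<and> \<alpha> \<le> \<eta> \<and> norm (z - v) \<le> \<eta> * Q \<and> (\<forall>j<m. f (Suc j) (xbar + \<alpha> *\<^sub>R z) = 0)
      \<and> (\<forall>j\<in>Jx. g j (xbar + \<alpha> *\<^sub>R z) \<le> 0) \<and> Pn (xbar + \<alpha> *\<^sub>R z)"
  proof (rule core[where F = "\<lambda>j. f (Suc j)" and H = g and ?A1.0 = A1 and ?A2.0 = A2 and AH = AH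
        and V = "\<lambda>j. Vv (Suc j)" and W = "\<lambda>j. Ww (Suc j)" and ?v0.0 = v0])
    show "finite Jx" by (rule finJ)
    show "\<forall>j<m. goodset (A1 j) \<and> goodset (A2 j)"
    proof (intro allI impI conjI)
      fix j assume j: "j < m"
      have cl: "cwc_set (Dlf (Suc j))" and cu: "cwc_set (Duf (Suc j))"
        using qdf(1)[OF Suc_in[OF j]] by (auto simp: quasidiff_def)
      show "goodset (A1 j)" unfolding A1_def
        by (rule good_mink1[OF cl cwc_bl[OF cu]]) (use ys_in Suc_in[OF j] in auto)
      show "goodset (A2 j)" unfolding A2_def
        by (rule good_mink2[OF cu cwc_bl[OF cl]]) (use xs_in Suc_in[OF j] in auto)
    qed
    show "\<forall>j\<in>Jx. goodset (AH j)"
    proof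
      fix j assume j: "j \<in> Jx"
      have cl: "cwc_set (Dlg j)" and cu: "cwc_set (Dug j)"
        using qdg(1)[OF j] by (auto simp: quasidiff_def)
      show "goodset (AH j)" unfolding AH_def
        by (rule good_mink1[OF cl cwc_bl[OF cu]]) (use zs_in j in auto)
    qed
    show "\<forall>j<m. \<forall>u. dir_deriv (f (Suc j)) xbar u \<le> supp (A1 j) u \<and> - dir_deriv (f (Suc j)) xbar u \<le> supp (A2 j) u"
    proof (intro allI impI conjI)
      fix j u assume j: "j < m"
      show "dir_deriv (f (Suc j)) xbar u \<le> supp (A1 j) u" unfolding A1_def
        by (rule qd_upper[OF qdf(1)[OF Suc_in[OF j]]]) (use ys_in Suc_in[OF j] in auto)
      show "- dir_deriv (f (Suc j)) xbar u \<le> supp (A2 j) u" unfolding A2_def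
        by (rule qd_lower[OF qdf(1)[OF Suc_in[OF j]]]) (use xs_in Suc_in[OF j] in auto)
    qed
    show "\<forall>j\<in>Jx. \<forall>u. dir_deriv (g j) xbar u \<le> supp (AH j) u"
      unfolding AH_def using qd_upper[OF qdg(1)] zs_in by blast
    show "\<forall>j<m. dir_diff_unif (f (Suc j)) xbar" using qdf(2) Suc_in by blast
    show "\<forall>j\<in>Jx. dir_diff_unif (g j) xbar" using qdg(2) by blast
    show "\<forall>j<m. f (Suc j) xbar = 0" using xbar_M Suc_in unfolding M_def by blast
    show "\<forall>j\<in>Jx. g j xbar = 0" unfolding Jx_def by blast
    show "\<forall>j<m. \<exists>U. open U \<and> xbar \<in> U \<and> continuous_on U (f (Suc j))" using f_cont Suc_in by blast
    show "\<exists>r>0. \<forall>y. dist y xbar < r \<longrightarrow> Pn y"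
    proof -
      have "\<exists>r>0. \<forall>j\<in>{1..l} - Jx. \<forall>y. dist y xbar < r \<longrightarrow> g j y \<le> 0"
      proof (rule fin_delta)
        show "\<forall>j\<in>{1..l} - Jx. \<exists>r>0. \<forall>y. dist y xbar < r \<longrightarrow> g j y \<le> 0"
        proof
          fix j assume j: "j \<in> {1..l} - Jx"
          have neg: "g j xbar < 0"
          proof -
            have "g j xbar \<le> 0" using xbar_M j unfolding M_def by auto
            moreover have "g j xbar \<noteq> 0" using j unfolding Jx_def by auto
            ultimately show ?thesis by simp
          qed
          have "\<forall>\<^sub>F y in at xbar. g j y < g j xbar + (- g j xbar)"
            using g_usc j neg unfolding usc_at_def by (metis neg_0_less_iff_less)
          then obtain d where d: "d > 0" "\<forall>y. y \<noteq> xbar \<and> dist y xbar < d \<longrightarrow> g j y < 0"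
            unfolding eventually_at by auto
          show "\<exists>r>0. \<forall>y. dist y xbar < r \<longrightarrow> g j y \<le> 0"
          proof (intro exI[of _ d] conjI allI impI)
            fix y assume "dist y xbar < d"
            then show "g j y \<le> 0" using d neg by (cases "y = xbar") (auto intro: less_imp_le)
          qed (rule d(1))
        qed
      qed auto
      then show ?thesis unfolding Pn_def by blast
    qed
    show "\<forall>j<m. supp (A1 j) v \<le> 0 \<and> supp (A2 j) v \<le> 0" unfolding A1_def A2_def using v1 Suc_in by blast
    show "\<forall>j\<in>Jx. supp (AH j) v \<le> 0" unfolding AH_def using v2 by blast
    show "\<forall>j\<in>Jx. supp (AH j) v0 < 0" unfolding AH_def using v0(1) by blast
    show "\<forall>j<m. supp (A1 j) v0 \<le> 0 \<and> supp (A2 j) v0 \<le> 0" unfolding A1_def A2_def using v0(2) Suc_in by blast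
    show "\<forall>i<m. supp (A1 i) (Vv (Suc i)) < 0 \<and> (\<forall>k<m. k \<noteq> i \<longrightarrow> supp (A1 k) (Vv (Suc i)) \<le> 0 \<and> supp (A2 k) (Vv (Suc i)) \<le> 0)"
    proof (intro allI impI conjI)
      fix i k assume i: "i < m"
      show "supp (A1 i) (Vv (Suc i)) < 0" unfolding A1_def using Vv Suc_in[OF i] by blast
      assume k: "k < m" "k \<noteq> i"
      have "Suc k \<noteq> Suc i" using k by simp
      then show "supp (A1 k) (Vv (Suc i)) \<le> 0" "supp (A2 k) (Vv (Suc i)) \<le> 0"
        unfolding A1_def A2_def using Vv Suc_in[OF i] Suc_in[OF k(1)] by blast+
    qed
    show "\<forall>i<m. supp (A2 i) (Ww (Suc i)) < 0 \<and> (\<forall>k<m. k \<noteq> i \<longrightarrow> supp (A2 k) (Ww (Suc i)) \<le> 0 \<and> supp (A1 k) (Ww (Suc i)) \<le> 0)"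
    proof (intro allI impI conjI)
      fix i k assume i: "i < m"
      show "supp (A2 i) (Ww (Suc i)) < 0" unfolding A2_def using Ww Suc_in[OF i] by blast
      assume k: "k < m" "k \<noteq> i"
      have "Suc k \<noteq> Suc i" using k by simp
      then show "supp (A2 k) (Ww (Suc i)) \<le> 0" "supp (A1 k) (Ww (Suc i)) \<le> 0"
        unfolding A1_def A2_def using Ww Suc_in[OF i] Suc_in[OF k(1)] by blast+
    qed
  qed
  then obtain Q where Q: "\<And>\<eta>. \<eta> > 0 \<Longrightarrow> \<exists>\<alpha> z. 0 < \<alpha> \<and> \<alpha> \<le> \<eta> \<and> norm (z - v) \<le> \<eta> * Q \<and> (\<forall>j<m. f (Suc j) (xbar + \<alpha> *\<^sub>R z) = 0)
      \<and> (\<forall>j\<in>Jx. g j (xbar + \<alpha> *\<^sub>R z) \<le> 0) \<and> Pn (xbar + \<alpha> *\<^sub>R z)" by blast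
  define P where "P n p = (0 < fst p \<and> fst p \<le> 1 / real (Suc n) \<and> norm (snd p - v) \<le> 1 / real (Suc n) * Q
      \<and> (\<forall>j<m. f (Suc j) (xbar + fst p *\<^sub>R snd p) = 0)
      \<and> (\<forall>j\<in>Jx. g j (xbar + fst p *\<^sub>R snd p) \<le> 0) \<and> Pn (xbar + fst p *\<^sub>R snd p))" for n p
  have "\<forall>n. \<exists>p. P n p"
  proof
    fix n
    obtain \<alpha> z where "0 < \<alpha> \<and> \<alpha> \<le> 1 / real (Suc n) \<and> norm (z - v) \<le> 1 / real (Suc n) * Q \<and> (\<forall>j<m. f (Suc j) (xbar + \<alpha> *\<^sub>R z) = 0)
      \<and> (\<forall>j\<in>Jx. g j (xbar + \<alpha> *\<^sub>R z) \<le> 0) \<and> Pn (xbar + \<alpha> *\<^sub>R z)"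
      using Q[of "1 / real (Suc n)"] by auto
    then have "P n (\<alpha>, z)" by (simp add: P_def)
    then show "\<exists>p. P n p" by blast
  qed
  then obtain p where p: "\<And>n. P n (p n)" by metis
  define al where "al n = fst (p n)" for n
  define w where "w n = snd (p n)" for n
  have al: "\<And>n. 0 < al n" "\<And>n. al n \<le> 1 / real (Suc n)" using p by (auto simp: P_def al_def)
  have wv: "\<And>n. norm (w n - v) \<le> 1 / real (Suc n) * Q" using p by (auto simp: P_def w_def)
  have inM: "xbar + al n *\<^sub>R w n \<in> M" for n
  proof -
    have h: "\<forall>j<m. f (Suc j) (xbar + al n *\<^sub>R w n) = 0" "\<forall>j\<in>Jx. g j (xbar + al n *\<^sub>R w n) \<le> 0"
      "Pn (xbar + al n *\<^sub>R w n)" using p[of n] by (auto simp: P_def al_def w_def)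
    have "f i (xbar + al n *\<^sub>R w n) = 0" if "i \<in> {1..m}" for i
    proof -
      have "i = Suc (i - 1)" "i - 1 < m" using that by auto
      then show ?thesis using h(1) by metis
    qed
    moreover have "g j (xbar + al n *\<^sub>R w n) \<le> 0" if "j \<in> {1..l}" for j
      using h(2,3) that unfolding Pn_def by (cases "j \<in> Jx") auto
    ultimately show ?thesis unfolding M_def by auto
  qed
  have inv0: "(\<lambda>n. 1 / real (Suc n)) \<longlonglongrightarrow> 0"
    using LIMSEQ_Suc[OF lim_const_over_n[of 1]] by simp
  have alim: "al \<longlonglongrightarrow> 0"
  proof (rule tendsto_sandwich[of "\<lambda>n. 0" _ _ "\<lambda>n. 1 / real (Suc n)"])
    show "\<forall>\<^sub>F n in sequentially. 0 \<le> al n" using al(1) by (intro always_eventually allI less_imp_le)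
    show "\<forall>\<^sub>F n in sequentially. al n \<le> 1 / real (Suc n)" using al(2) by (intro always_eventually allI)
  qed (use inv0 in auto)
  have "(\<lambda>n. norm (w n - v)) \<longlonglongrightarrow> 0"
  proof (rule tendsto_sandwich[of "\<lambda>n. 0" _ _ "\<lambda>n. 1 / real (Suc n) * Q"])
    show "(\<lambda>n. 1 / real (Suc n) * Q) \<longlonglongrightarrow> 0" using tendsto_mult[OF inv0 tendsto_const[of Q]] by simp
  qed (use wv in auto)
  then have wlim: "w \<longlonglongrightarrow> v"
    by (subst Lim_null) (simp add: tendsto_norm_zero_iff)
  show "v \<in> contingent_cone M xbar"
    unfolding contingent_cone_def
    by (intro CollectI exI[of _ al] exI[of _ w] conjI allI) (use al(1) alim wlim inM in auto)
qed

end
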